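(* Let $m_1,\dots,m_{d+1}$ be positive integers, $n=\sum_{j=1}^{d+1}m_j$, and let $\mathbb{U}_1,\dots,\mathbb{U}_{d+1}$ be subspaces of $\mathbb{R}^n$ with $\dim\mathbb{U}_j=m_j$. Let $\mathcal F$ be the flag manifold of tuples $\mathbb{W}=(\mathbb{W}_1,\dots,\mathbb{W}_{d+1})$ of pairwise orthogonal subspaces of $\mathbb{R}^n$ with $\dim\mathbb{W}_j=m_j$, and define \[ F(\mathbb{W})=\sum_{j=1}^{d+1}\|\tau(\mathbb{U}_j)-\tau(\mathbb{W}_j)\|_F^2,\qquad \tau(\mathbb{W})=2P_{\mathbb{W}}-I_n . \] Consider the following randomized coordinate minimization: start from any $\mathbb{W}^{(0)}\in\mathcal F$; at step $i$, choose a pair $(s_i,t_i)$ uniformly at random (independently) among all pairs $1\le s<t\le d+1$, and obtain $\mathbb{W}^{(i+1)}$ from $\mathbb{W}^{(i)}$ by replacing $(\mathbb{W}_{s_i},\mathbb{W}_{t_i})$ with a minimizer $(\mathbb{X}_{s_i},\mathbb{X}_{t_i})$ of $F$ over all pairs of subspaces of dimensions $m_{s_i},m_{t_i}$ such that $\mathbb{X}_{s_i}\perp\mathbb{X}_{t_i}$ and both are orthogonal to $\mathbb{W}^{(i)}_j$ for every $j\ne s_i,t_i$ (all other components kept fixed). Then, with probability $1$, every cluster point of the sequence $(\mathbb{W}^{(i)})$ (which exists since $\mathcal F$ is compact) is a stationary point of $F$ on $\mathcal F$.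
   Context: $P_{\mathbb{W}}$ denotes the orthogonal projection onto $\mathbb{W}$, so $\tau(\mathbb{W})$ is the symmetric orthogonal matrix with eigenvalue $+1$ on $\mathbb{W}$ and $-1$ on $\mathbb{W}^\perp$. $\|\cdot\|_F$ is the Frobenius norm. A stationary point of $F$ on the manifold $\mathcal F$ is a point where the Riemannian gradient (equivalently, the differential) of $F|_{\mathcal F}$ vanishes. *)

theory Defs
  imports "HOL-Analysis.Analysis" "HOL-Probability.Probability"
begin

definition orth_proj :: "(real^'n) set \<Rightarrow> real^'n \<Rightarrow> real^'n" where
  "orth_proj W x = (THE y. y \<in> W \<and> (\<forall>w\<in>W. inner (x - y) w = 0))"

definition proj_mat :: "(real^'n) set \<Rightarrow> real^'n^'n" where
  "proj_mat W = matrix (orth_proj W)"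

definition tau :: "(real^'n) set \<Rightarrow> real^'n^'n" where
  "tau W = 2 *\<^sub>R proj_mat W - mat 1"

definition frob_norm :: "real^'n^'n \<Rightarrow> real" where
  "frob_norm A = sqrt (\<Sum>i\<in>UNIV. \<Sum>j\<in>UNIV. (A $ i $ j)^2)"

text \<open>The flag manifold: tuples (W_1,...,W_{d+1}) (indices 1..d+1) of pairwise orthogonal
  subspaces with dim W_j = m_j.  Components at other indices are irrelevant.\<close>
definition flags :: "(nat \<Rightarrow> nat) \<Rightarrow> nat \<Rightarrow> (nat \<Rightarrow> (real^'n) set) set" where
  "flags m d = {W. (\<forall>j\<in>{1..d+1}. subspace (W j) \<and> dim (W j) = m j) \<and>
      (\<forall>i\<in>{1..d+1}. \<forall>j\<in>{1..d+1}. i \<noteq> j \<longrightarrow> (\<forall>x\<in>W i. \<forall>y\<in>W j. orthogonal x y))}"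

definition objF :: "(nat \<Rightarrow> (real^'n) set) \<Rightarrow> nat \<Rightarrow> (nat \<Rightarrow> (real^'n) set) \<Rightarrow> real" where
  "objF U d W = (\<Sum>j=1..d+1. (frob_norm (tau (U j) - tau (W j)))^2)"

definition coord_feasible ::
  "(nat \<Rightarrow> nat) \<Rightarrow> nat \<Rightarrow> (nat \<Rightarrow> (real^'n) set) \<Rightarrow> nat \<Rightarrow> nat \<Rightarrow> (nat \<Rightarrow> (real^'n) set) set" where
  "coord_feasible m d W s t = {X \<in> flags m d. \<forall>j. j \<noteq> s \<and> j \<noteq> t \<longrightarrow> X j = W j}"

definition pairs :: "nat \<Rightarrow> (nat \<times> nat) set" where
  "pairs d = {(s,t). 1 \<le> s \<and> s < t \<and> t \<le> d+1}"

definition stationary ::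
  "(nat \<Rightarrow> nat) \<Rightarrow> nat \<Rightarrow> (nat \<Rightarrow> (real^'n) set) \<Rightarrow> (nat \<Rightarrow> (real^'n) set) \<Rightarrow> bool" where
  "stationary m d U W \<longleftrightarrow> W \<in> flags m d \<and>
     (\<forall>\<gamma> :: real \<Rightarrow> nat \<Rightarrow> (real^'n) set.
        (\<forall>x. \<gamma> x \<in> flags m d) \<and> \<gamma> 0 = W \<and>
        (\<forall>j\<in>{1..d+1}. (\<lambda>x. proj_mat (\<gamma> x j)) differentiable (at 0))
        \<longrightarrow> ((\<lambda>x. objF U d (\<gamma> x)) has_real_derivative 0) (at 0))"

definition flag_cluster_point ::
  "(nat \<Rightarrow> nat) \<Rightarrow> nat \<Rightarrow> (nat \<Rightarrow> nat \<Rightarrow> (real^'n) set) \<Rightarrow> (nat \<Rightarrow> (real^'n) set) \<Rightarrow> bool" where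
  "flag_cluster_point m d seq Wc \<longleftrightarrow> Wc \<in> flags m d \<and>
     (\<exists>r. strict_mono r \<and>
        (\<forall>j\<in>{1..d+1}. (\<lambda>k. proj_mat (seq (r k) j)) \<longlonglongrightarrow> proj_mat (Wc j)))"

end

theory Submission
  imports Defs
begin

definition shiftE :: "(nat \<Rightarrow> 'a stream \<Rightarrow> bool) \<Rightarrow> 'a \<Rightarrow> nat \<Rightarrow> 'a stream \<Rightarrow> bool" where
  "shiftE E x i t = E (Suc i) (x ## t)"

fun Hs :: "'a \<Rightarrow> nat \<Rightarrow> nat \<Rightarrow> (nat \<Rightarrow> 'a stream \<Rightarrow> bool) \<Rightarrow> 'a stream \<Rightarrow> bool" where
  "Hs p 0 M E s = (M = 0)"
| "Hs p (Suc L) M E s = (M = 0 \<or> (if E 0 s then shd s \<noteq> p \<and> Hs p L (M - 1) (shiftE E (shd s)) (stl s)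
       else Hs p L M (shiftE E (shd s)) (stl s)))"

definition nonant :: "(nat \<Rightarrow> 'a stream \<Rightarrow> bool) \<Rightarrow> bool" where
  "nonant E = (\<forall>i s s'. stake i s = stake i s' \<longrightarrow> E i s = E i s')"

lemma nonant_shift: assumes "nonant E" shows "nonant (shiftE E x)"
  unfolding nonant_def shiftE_def
proof (intro allI impI)
  fix i s s' assume "stake i s = stake i (s'::'a stream)"
  then have "stake (Suc i) (x ## s) = stake (Suc i) (x ## s')" by simp
  then show "E (Suc i) (x ## s) = E (Suc i) (x ## s')" using assms unfolding nonant_def by blast
qed

lemma nonant_E0: "nonant E \<Longrightarrow> E 0 s = E 0 s'"
  unfolding nonant_def by (metis stake.simps(1))

lemma Hs_pred:
  fixes N :: "'a::countable pmf"
  assumes "nonant E"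
  shows "Measurable.pred (stream_space (measure_pmf N)) (Hs p L M E)"
  using assms
proof (induction L arbitrary: M E)
  case 0
  then show ?case by simp
next
  case (Suc L)
  have shd: "shd \<in> measurable (stream_space (measure_pmf N)) (count_space UNIV)"
    using measurable_shd[of "measure_pmf N"] by (simp add: measurable_cong_sets)
  have m1: "Measurable.pred (stream_space (measure_pmf N)) (\<lambda>s. Hs p L (M - 1) (shiftE E (shd s)) (stl s))"
    by (rule measurable_compose_countable[where f="\<lambda>x s. Hs p L (M - 1) (shiftE E x) (stl s)", OF _ shd])
       (rule measurable_compose[OF measurable_stl Suc.IH[OF nonant_shift[OF Suc.prems]]])
  have m2: "Measurable.pred (stream_space (measure_pmf N)) (\<lambda>s. Hs p L M (shiftE E (shd s)) (stl s))"
    by (rule measurable_compose_countable[where f="\<lambda>x s. Hs p L M (shiftE E x) (stl s)", OF _ shd])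
       (rule measurable_compose[OF measurable_stl Suc.IH[OF nonant_shift[OF Suc.prems]]])
  have m3: "Measurable.pred (stream_space (measure_pmf N)) (\<lambda>s. shd s = p)"
    using shd by (simp add: pred_intros_logic)
  have c: "\<And>s. E 0 s = E 0 (sconst undefined)" using nonant_E0[OF Suc.prems] by blast
  have "Measurable.pred (stream_space (measure_pmf N)) (\<lambda>s. M = 0 \<or> (if E 0 (sconst undefined) then shd s \<noteq> p \<and> Hs p L (M - 1) (shiftE E (shd s)) (stl s)
       else Hs p L M (shiftE E (shd s)) (stl s)))"
  proof (cases "E 0 (sconst undefined)")
    case True
    show ?thesis unfolding if_P[OF True] by (intro pred_intros_logic m1 m3 measurable_const) simp
  next
    case False
    show ?thesis unfolding if_not_P[OF False] by (intro pred_intros_logic m2 measurable_const) simp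
  qed
  moreover have "Hs p (Suc L) M E = (\<lambda>s. M = 0 \<or> (if E 0 (sconst undefined) then shd s \<noteq> p \<and> Hs p L (M - 1) (shiftE E (shd s)) (stl s)
       else Hs p L M (shiftE E (shd s)) (stl s)))"
    by (rule ext, subst Hs.simps(2), subst c, rule refl)
  ultimately show ?case by argo
qed

lemma Hs_mono: "Hs p L M E s \<Longrightarrow> Hs p (Suc L) M E s"
proof (induction L arbitrary: M E s)
  case 0 then show ?case by simp
next
  case (Suc L)
  have a: "Hs p (Suc (Suc L)) M E s = (M = 0 \<or> (if E 0 s then shd s \<noteq> p \<and> Hs p (Suc L) (M - 1) (shiftE E (shd s)) (stl s)
       else Hs p (Suc L) M (shiftE E (shd s)) (stl s)))" by (rule Hs.simps(2))
  have b: "Hs p (Suc L) M E s = (M = 0 \<or> (if E 0 s then shd s \<noteq> p \<and> Hs p L (M - 1) (shiftE E (shd s)) (stl s)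
       else Hs p L M (shiftE E (shd s)) (stl s)))" by (rule Hs.simps(2))
  show ?case using Suc.prems Suc.IH unfolding a b by (auto split: if_splits simp del: Hs.simps)
qed

lemma Hs_sets:
  fixes N :: "'a::countable pmf"
  assumes "nonant E"
  shows "{s. Hs p L M E s} \<in> sets (stream_space (measure_pmf N))"
  using Measurable.predE[OF Hs_pred[OF assms, where N=N and p=p and L=L and M=M]] by (simp add: space_stream_space)

lemma Hs_bound:
  fixes N :: "'a::countable pmf"
  assumes "nonant E"
  shows "emeasure (stream_space (measure_pmf N)) {s. Hs p L M E s} \<le> ennreal ((1 - pmf N p) ^ M)"
  using assms
proof (induction L arbitrary: M E)
  case 0
  interpret S: prob_space "stream_space (measure_pmf N)"
    by (rule prob_space.prob_space_stream_space) (rule prob_space_measure_pmf)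
  show ?case
  proof (cases "M = 0")
    case True
    then show ?thesis using S.emeasure_le_1[of "{s. Hs p 0 M E s}"] by simp
  next
    case False
    then show ?thesis by simp
  qed
next
  case (Suc L)
  interpret N: prob_space "measure_pmf N" by (rule prob_space_measure_pmf)
  interpret S: prob_space "stream_space (measure_pmf N)"
    by (rule prob_space.prob_space_stream_space) (rule prob_space_measure_pmf)
  define r where "r = 1 - pmf N p"
  have r0: "0 \<le> r" unfolding r_def by (simp add: pmf_le_1)
  have sp: "space (stream_space (measure_pmf N)) = UNIV" by (simp add: space_stream_space)
  show ?case
  proof (cases "M = 0")
    case True
    then show ?thesis using S.emeasure_le_1[of "{s. Hs p (Suc L) M E s}"] by simp
  next
    case Mpos: False
    have c: "\<And>t x. E 0 (t ## x) = E 0 (sconst undefined)" using nonant_E0[OF Suc.prems] by blast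
    have "emeasure (stream_space (measure_pmf N)) {s. Hs p (Suc L) M E s}
        = (\<integral>\<^sup>+t. emeasure (stream_space (measure_pmf N)) {x\<in>space (stream_space (measure_pmf N)). t ## x \<in> {s. Hs p (Suc L) M E s}} \<partial>measure_pmf N)"
      by (rule prob_space.emeasure_stream_space[OF prob_space_measure_pmf Hs_sets[OF Suc.prems]])
    also have "\<dots> \<le> ennreal (r ^ M)"
    proof (cases "E 0 (sconst undefined)")
      case True
      have "(\<integral>\<^sup>+t. emeasure (stream_space (measure_pmf N)) {x\<in>space (stream_space (measure_pmf N)). t ## x \<in> {s. Hs p (Suc L) M E s}} \<partial>measure_pmf N)
          \<le> (\<integral>\<^sup>+t. ennreal (r ^ (M - 1)) * indicator (UNIV - {p}) t \<partial>measure_pmf N)"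
      proof (rule nn_integral_mono)
        fix t
        show "emeasure (stream_space (measure_pmf N)) {x\<in>space (stream_space (measure_pmf N)). t ## x \<in> {s. Hs p (Suc L) M E s}}
             \<le> ennreal (r ^ (M - 1)) * indicator (UNIV - {p}) t"
        proof (cases "t = p")
          case True
          then show ?thesis using Mpos c \<open>E 0 (sconst undefined)\<close> by (simp add: sp)
        next
          case False
          have "{x\<in>space (stream_space (measure_pmf N)). t ## x \<in> {s. Hs p (Suc L) M E s}} = {x. Hs p L (M - 1) (shiftE E t) x}"
            using Mpos c \<open>E 0 (sconst undefined)\<close> False by (auto simp: sp)
          then show ?thesis using Suc.IH[OF nonant_shift[OF Suc.prems], of "M - 1" t] False r_def
            by simp
        qed
      qed
      also have "\<dots> = ennreal (r ^ (M - 1)) * emeasure (measure_pmf N) (UNIV - {p})"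
        by (rule nn_integral_cmult_indicator) simp
      also have "emeasure (measure_pmf N) (UNIV - {p}) = ennreal r"
      proof -
        have "measure (measure_pmf N) (UNIV - {p}) = 1 - pmf N p"
          using measure_pmf.prob_compl[of "{p}" N] by (simp add: measure_pmf_single Compl_eq_Diff_UNIV)
        then show ?thesis by (simp add: measure_pmf.emeasure_eq_measure r_def)
      qed
      also have "ennreal (r ^ (M - 1)) * ennreal r = ennreal (r ^ M)"
        using Mpos r0 by (simp add: ennreal_mult'[symmetric] power_eq_if mult.commute) 
      finally show ?thesis .
    next
      case False
      have "(\<integral>\<^sup>+t. emeasure (stream_space (measure_pmf N)) {x\<in>space (stream_space (measure_pmf N)). t ## x \<in> {s. Hs p (Suc L) M E s}} \<partial>measure_pmf N)
          \<le> (\<integral>\<^sup>+t. ennreal (r ^ M) \<partial>measure_pmf N)"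
      proof (rule nn_integral_mono)
        fix t
        have "{x\<in>space (stream_space (measure_pmf N)). t ## x \<in> {s. Hs p (Suc L) M E s}} = {x. Hs p L M (shiftE E t) x}"
          using Mpos c False by (auto simp: sp)
        then show "emeasure (stream_space (measure_pmf N)) {x\<in>space (stream_space (measure_pmf N)). t ## x \<in> {s. Hs p (Suc L) M E s}}
             \<le> ennreal (r ^ M)"
          using Suc.IH[OF nonant_shift[OF Suc.prems], of M t] r_def by simp
      qed
      also have "\<dots> = ennreal (r ^ M)" by (simp add: measure_pmf.emeasure_space_1)
      finally show ?thesis .
    qed
    finally show ?thesis unfolding r_def .
  qed
qed

lemma Hs_intro:
  "(\<forall>i. E i s \<longrightarrow> s !! i \<noteq> p) \<Longrightarrow> M \<le> (\<Sum>i<L. if E i s then 1 else (0::nat)) \<Longrightarrow> Hs p L M E s"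
proof (induction L arbitrary: M E s)
  case 0 then show ?case by simp
next
  case (Suc L)
  have sh: "shiftE E (shd s) i (stl s) = E (Suc i) s" for i
    unfolding shiftE_def by simp
  have sum: "(\<Sum>i<Suc L. if E i s then 1 else (0::nat)) = (if E 0 s then 1 else 0) + (\<Sum>i<L. if shiftE E (shd s) i (stl s) then 1 else 0)"
    unfolding sh by (rule sum.lessThan_Suc_shift)
  have pr: "\<forall>i. shiftE E (shd s) i (stl s) \<longrightarrow> stl s !! i \<noteq> p"
  proof (intro allI impI)
    fix i assume "shiftE E (shd s) i (stl s)"
    then show "stl s !! i \<noteq> p" using Suc.prems(1)[rule_format, of "Suc i"] unfolding sh by simp
  qed
  show ?case
  proof (cases "M = 0")
    case True then show ?thesis by simp
  next
    case False
    show ?thesis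
    proof (cases "E 0 s")
      case True
      have "shd s \<noteq> p" using Suc.prems(1) True by (metis snth.simps(1))
      moreover have "Hs p L (M - 1) (shiftE E (shd s)) (stl s)"
        using Suc.IH[where E="shiftE E (shd s)" and s="stl s", OF pr] Suc.prems(2) True unfolding sum by simp
      ultimately show ?thesis using True False by simp
    next
      case F: False
      have "Hs p L M (shiftE E (shd s)) (stl s)"
        using Suc.IH[where E="shiftE E (shd s)" and s="stl s", OF pr] Suc.prems(2) F unfolding sum by simp
      then show ?thesis using F by simp
    qed
  qed
qed

lemma cnt_unbounded:
  fixes P :: "nat \<Rightarrow> bool"
  assumes "infinite {i. P i}"
  shows "\<exists>L. M \<le> (\<Sum>i<L. if P i then 1 else (0::nat))"
proof (induction M)
  case 0 then show ?case by simp
next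
  case (Suc M)
  then obtain L where L: "M \<le> (\<Sum>i<L. if P i then 1 else (0::nat))" by blast
  have "\<exists>i\<ge>L. P i"
  proof (rule ccontr)
    assume "\<not> (\<exists>i\<ge>L. P i)"
    then have "{i. P i} \<subseteq> {..<L}"
    proof (intro subsetI)
      fix x assume a: "\<not> (\<exists>i\<ge>L. P i)" and "x \<in> {i. P i}"
      then have "\<not> (x \<ge> L)" by blast
      then show "x \<in> {..<L}" by simp
    qed
    then show False using assms finite_subset by blast
  qed
  then obtain i where i: "i \<ge> L" "P i" by blast
  have "(\<Sum>i<L. if P i then 1 else (0::nat)) \<le> (\<Sum>i<i. if P i then 1 else (0::nat))"
    by (rule sum_mono2) (use i in auto)
  then have "Suc M \<le> (\<Sum>i<Suc i. if P i then 1 else (0::nat))" using L i by simp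
  then show ?case by blast
qed

lemma AE_hit:
  fixes N :: "'a::countable pmf"
  assumes ne: "nonant E" and pp: "pmf N p > 0"
  shows "AE s in stream_space (measure_pmf N). (\<exists>\<^sub>\<infinity>i. E i s) \<longrightarrow> (\<exists>\<^sub>\<infinity>i. E i s \<and> s !! i = p)"
proof -
  interpret S: prob_space "stream_space (measure_pmf N)"
    by (rule prob_space.prob_space_stream_space) (rule prob_space_measure_pmf)
  define EK where "EK K i s = (K \<le> i \<and> E i s)" for K i s
  have nK: "nonant (EK K)" for K
    using ne unfolding nonant_def EK_def by blast
  define B where "B = (\<Union>K. \<Inter>M. \<Union>L. {s. Hs p L M (EK K) s})"
  define r where "r = 1 - pmf N p"
  have r0: "0 \<le> r" "r < 1" unfolding r_def using pp by (auto simp: pmf_le_1)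
  have "(\<Inter>M. \<Union>L. {s. Hs p L M (EK K) s}) \<in> null_sets (stream_space (measure_pmf N))" for K
  proof -
    let ?X = "\<Inter>M. \<Union>L. {s. Hs p L M (EK K) s}"
    have sets: "{s. Hs p L M (EK K) s} \<in> sets (stream_space (measure_pmf N))" for L M
      by (rule Hs_sets[OF nK])
    have Xs: "?X \<in> sets (stream_space (measure_pmf N))" using sets by auto
    have le: "S.prob ?X \<le> r ^ M" for M
    proof -
      have "emeasure (stream_space (measure_pmf N)) ?X \<le> emeasure (stream_space (measure_pmf N)) (\<Union>L. {s. Hs p L M (EK K) s})"
        by (rule emeasure_mono) (use sets in auto)
      also have "\<dots> = (SUP L. emeasure (stream_space (measure_pmf N)) {s. Hs p L M (EK K) s})"
      proof (rule SUP_emeasure_incseq[symmetric])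
        show "range (\<lambda>L. {s. Hs p L M (EK K) s}) \<subseteq> sets (stream_space (measure_pmf N))" using sets by blast
        show "incseq (\<lambda>L. {s. Hs p L M (EK K) s})" by (rule incseq_SucI) (blast intro: Hs_mono)
      qed
      also have "\<dots> \<le> ennreal (r ^ M)"
        using Hs_bound[OF nK] unfolding r_def by (simp add: SUP_le_iff)
      finally show ?thesis using r0 by (simp add: S.emeasure_eq_measure)
    qed
    have "S.prob ?X \<le> 0"
      by (rule LIMSEQ_le_const[OF LIMSEQ_power_zero[of r]]) (use r0 le in auto)
    then have "S.prob ?X = 0" using measure_nonneg[of "stream_space (measure_pmf N)" ?X] by linarith
    then show ?thesis using Xs by (simp add: S.emeasure_eq_measure null_sets_def)
  qed
  then have Bnull: "B \<in> null_sets (stream_space (measure_pmf N))" unfolding B_def by blast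
  show ?thesis
  proof (rule AE_I'[OF Bnull], intro subsetI)
    fix s assume "s \<in> {s \<in> space (stream_space (measure_pmf N)). \<not> ((\<exists>\<^sub>\<infinity>i. E i s) \<longrightarrow> (\<exists>\<^sub>\<infinity>i. E i s \<and> s !! i = p))}"
    then have inf: "\<exists>\<^sub>\<infinity>i. E i s" and ninf: "\<not> (\<exists>\<^sub>\<infinity>i. E i s \<and> s !! i = p)" by auto
    obtain m where m: "\<forall>n>m. \<not> (E n s \<and> s !! n = p)" using ninf unfolding INFM_nat by blast
    have hit: "\<forall>i. EK (Suc m) i s \<longrightarrow> s !! i \<noteq> p" using m unfolding EK_def by auto
    have "infinite {i. E i s}" using inf unfolding INFM_iff_infinite .
    moreover have "{i. E i s} \<subseteq> {i. EK (Suc m) i s} \<union> {..<Suc m}" unfolding EK_def by auto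
    ultimately have "infinite {i. EK (Suc m) i s}" using finite_subset by blast
    then have "\<forall>M. \<exists>L. Hs p L M (EK (Suc m)) s"
      using cnt_unbounded Hs_intro[where E="EK (Suc m)" and s=s, OF hit] by blast
    then show "s \<in> B" unfolding B_def by blast
  qed
qed

lemma orth_proj_ex:
  fixes W :: "(real^'n) set"
  assumes "subspace W"
  shows "\<exists>y. y \<in> W \<and> (\<forall>w\<in>W. inner (x - y) w = 0)"
proof -
  obtain y z where "y \<in> span W" "\<And>w. w \<in> span W \<Longrightarrow> orthogonal z w" "x = y + z"
    using orthogonal_subspace_decomp_exists by blast
  then show ?thesis using assms span_eq_iff[of W] span_superset[of W]
    by (metis add_diff_cancel_left' orthogonal_def subsetD)
qed

lemma orth_proj_uniq:
  fixes W :: "(real^'n) set"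
  assumes "subspace W" "y \<in> W" "\<forall>w\<in>W. inner (x - y) w = 0" "y' \<in> W" "\<forall>w\<in>W. inner (x - y') w = 0"
  shows "y = y'"
proof -
  have d: "y - y' \<in> W" using assms by (simp add: subspace_diff)
  have "inner (y - y') (y - y') = inner (x - y') (y - y') - inner (x - y) (y - y')"
    by (simp add: inner_diff_left)
  also have "\<dots> = 0" using assms d by simp
  finally show ?thesis by simp
qed

lemma orth_proj:
  fixes W :: "(real^'n) set"
  assumes "subspace W"
  shows "orth_proj W x \<in> W" "\<forall>w\<in>W. inner (x - orth_proj W x) w = 0"
proof -
  have "\<exists>!y. y \<in> W \<and> (\<forall>w\<in>W. inner (x - y) w = 0)"
    using orth_proj_ex[OF assms] orth_proj_uniq[OF assms] by blast
  from theI'[OF this] show "orth_proj W x \<in> W" "\<forall>w\<in>W. inner (x - orth_proj W x) w = 0"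
    unfolding orth_proj_def by auto
qed

lemma orth_proj_eqI:
  fixes W :: "(real^'n) set"
  assumes "subspace W" "y \<in> W" "\<And>w. w \<in> W \<Longrightarrow> inner (x - y) w = 0"
  shows "orth_proj W x = y"
  using orth_proj_uniq[where W=W and x=x and y="orth_proj W x" and y'=y] orth_proj[OF assms(1), of x] assms by blast

lemma orth_proj_linear:
  fixes W :: "(real^'n) set"
  assumes "subspace W"
  shows "linear (orth_proj W)"
proof (rule linearI)
  fix x y
  show "orth_proj W (x + y) = orth_proj W x + orth_proj W y"
  proof (rule orth_proj_eqI[OF assms])
    show "orth_proj W x + orth_proj W y \<in> W" using orth_proj[OF assms] assms by (simp add: subspace_add)
    fix w assume "w \<in> W"
    then have "inner (x - orth_proj W x) w = 0" "inner (y - orth_proj W y) w = 0" using orth_proj[OF assms] by blast+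
    moreover have "x + y - (orth_proj W x + orth_proj W y) = (x - orth_proj W x) + (y - orth_proj W y)" by simp
    ultimately show "inner (x + y - (orth_proj W x + orth_proj W y)) w = 0" by (simp only: inner_add_left)
  qed
next
  fix c :: real and x
  show "orth_proj W (c *\<^sub>R x) = c *\<^sub>R orth_proj W x"
  proof (rule orth_proj_eqI[OF assms])
    show "c *\<^sub>R orth_proj W x \<in> W" using orth_proj[OF assms] assms by (simp add: subspace_scale)
    fix w assume "w \<in> W"
    then have "inner (x - orth_proj W x) w = 0" using orth_proj[OF assms] by blast
    then show "inner (c *\<^sub>R x - c *\<^sub>R orth_proj W x) w = 0"
      by (simp add: scaleR_diff_right[symmetric])
  qed
qed

lemma proj_mat_mult:
  fixes W :: "(real^'n) set"
  assumes "subspace W"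
  shows "proj_mat W *v x = orth_proj W x"
  unfolding proj_mat_def using matrix_works[of "orth_proj W", unfolded linear_matrix_vector_mul_eq] orth_proj_linear[OF assms] by simp

lemma orth_proj_id: "subspace W \<Longrightarrow> x \<in> W \<Longrightarrow> orth_proj W x = x"
  by (rule orth_proj_eqI) auto

lemma orth_proj_zero: "subspace W \<Longrightarrow> (\<And>w. w \<in> W \<Longrightarrow> inner x w = 0) \<Longrightarrow> orth_proj W x = 0"
  by (rule orth_proj_eqI) (auto simp: subspace_0)

lemma orth_proj_selfadj:
  fixes W :: "(real^'n) set"
  assumes "subspace W"
  shows "inner (orth_proj W x) y = inner x (orth_proj W y)"
proof -
  have a: "inner (y - orth_proj W y) (orth_proj W x) = 0" using orth_proj[OF assms] by blast
  have b: "inner (x - orth_proj W x) (orth_proj W y) = 0" using orth_proj[OF assms] by blast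
  have "inner (orth_proj W x) (y - orth_proj W y) = 0" using a by (simp only: inner_commute)
  then have "inner (orth_proj W x) y - inner (orth_proj W x) (orth_proj W y) = 0" by (simp only: inner_diff_right)
  then have a': "inner (orth_proj W x) y = inner (orth_proj W x) (orth_proj W y)" by simp
  have "inner (x - orth_proj W x) (orth_proj W y) = 0" using b by (simp only: inner_commute)
  then have "inner x (orth_proj W y) - inner (orth_proj W x) (orth_proj W y) = 0" by (simp only: inner_diff_left)
  then have b': "inner x (orth_proj W y) = inner (orth_proj W x) (orth_proj W y)" by simp
  show ?thesis using a' b' by simp
qed

lemma mat_entry_inner: "(A::real^'n^'m) $ i $ j = inner (A *v axis j 1) (axis i 1)"
  unfolding cart_eq_inner_axis[symmetric] by (simp add: matrix_vector_mult_def axis_def if_distrib cong: if_cong)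

lemma proj_mat_sym:
  assumes "subspace W"
  shows "transpose (proj_mat W) = proj_mat (W :: (real^'n) set)"
proof -
  have "proj_mat W $ j $ i = proj_mat W $ i $ j" for i j
    unfolding mat_entry_inner proj_mat_mult[OF assms]
    using orth_proj_selfadj[OF assms, of "axis i 1" "axis j 1"] by (simp add: inner_commute)
  then show ?thesis by (simp add: transpose_def vec_eq_iff)
qed

lemma proj_mat_idem:
  assumes "subspace W"
  shows "proj_mat W ** proj_mat W = proj_mat (W :: (real^'n) set)"
  unfolding matrix_eq
  by (simp add: matrix_vector_mul_assoc[symmetric] proj_mat_mult[OF assms] orth_proj_id[OF assms] orth_proj[OF assms])

lemma proj_mat_orth:
  assumes "subspace V" "subspace W" "\<forall>x\<in>V. \<forall>y\<in>W. orthogonal x y"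
  shows "proj_mat V ** proj_mat W = (0 :: real^'n^'n)"
  unfolding matrix_eq
proof
  fix x :: "real^'n"
  have "orth_proj V (orth_proj W x) = 0"
    by (rule orth_proj_zero[OF assms(1)]) (use assms(3) orth_proj(1)[OF assms(2), of x] in \<open>auto simp: orthogonal_def inner_commute\<close>)
  then show "(proj_mat V ** proj_mat W) *v x = 0 *v x"
    by (simp add: matrix_vector_mul_assoc[symmetric] proj_mat_mult[OF assms(1)] proj_mat_mult[OF assms(2)])
qed

lemma sum_mat_vec: "finite S \<Longrightarrow> (sum f S) *v x = (\<Sum>j\<in>S. f j *v (x::real^'n))"
  by (induction S rule: finite_induct) (simp_all add: matrix_vector_mult_add_rdistrib)

lemma flagsD:
  assumes "W \<in> flags m d"
  shows "\<And>j. j \<in> {1..d+1} \<Longrightarrow> subspace (W j)" "\<And>j. j \<in> {1..d+1} \<Longrightarrow> dim (W j) = m j"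
    "\<And>i j x y. i \<in> {1..d+1} \<Longrightarrow> j \<in> {1..d+1} \<Longrightarrow> i \<noteq> j \<Longrightarrow> x \<in> W i \<Longrightarrow> y \<in> W j \<Longrightarrow> inner x y = 0"
  using assms unfolding flags_def orthogonal_def by auto

lemma proj_sum_id:
  fixes W :: "nat \<Rightarrow> (real^'n) set"
  assumes fl: "W \<in> flags m d" and card: "CARD('n) = (\<Sum>j=1..d+1. m j)"
  shows "(\<Sum>j\<in>{1..d+1}. proj_mat (W j)) = mat 1"
proof -
  let ?I = "{1..d+1::nat}"
  note sub = flagsD(1)[OF fl] and dm = flagsD(2)[OF fl] and orth = flagsD(3)[OF fl]
  have key: "(\<Sum>j\<in>?I. orth_proj (W j) x) = x" for x
  proof (rule ccontr)
    define y where "y = x - (\<Sum>j\<in>?I. orth_proj (W j) x)"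
    assume "(\<Sum>j\<in>?I. orth_proj (W j) x) \<noteq> x"
    then have y0: "y \<noteq> 0" by (simp add: y_def)
    have yorth: "inner y w = 0" if k: "k \<in> ?I" and w: "w \<in> W k" for k w
    proof -
      have "inner (\<Sum>j\<in>?I. orth_proj (W j) x) w = (\<Sum>j\<in>?I. inner (orth_proj (W j) x) w)"
        by (rule inner_sum_left)
      also have "\<dots> = inner (orth_proj (W k) x) w + (\<Sum>j\<in>?I - {k}. inner (orth_proj (W j) x) w)"
        by (rule sum.remove) (use k in auto)
      also have "(\<Sum>j\<in>?I - {k}. inner (orth_proj (W j) x) w) = 0"
        by (rule sum.neutral) (use orth k w orth_proj(1)[OF sub] in blast)
      also have "inner (orth_proj (W k) x) w = inner x w"
        using orth_proj_selfadj[OF sub[OF k], of x w] orth_proj_id[OF sub[OF k] w] by simp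
      finally show ?thesis by (simp add: y_def inner_diff_left)
    qed
    have "\<forall>j\<in>?I. \<exists>B. B \<subseteq> W j \<and> pairwise orthogonal B \<and> (\<forall>x\<in>B. norm x = 1) \<and> independent B \<and> card B = dim (W j)"
    proof
      fix j assume j: "j \<in> ?I"
      show "\<exists>B. B \<subseteq> W j \<and> pairwise orthogonal B \<and> (\<forall>x\<in>B. norm x = 1) \<and> independent B \<and> card B = dim (W j)"
      proof (rule orthonormal_basis_subspace[OF sub[OF j]])
        fix B assume b1: "B \<subseteq> W j" and b2: "pairwise orthogonal B" and b3: "\<And>x. x \<in> B \<Longrightarrow> norm x = 1"
          and b4: "independent B" and b5: "card B = dim (W j)"
        show ?thesis by (rule exI[of _ B]) (simp add: b1 b2 b3 b4 b5)
      qed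
    qed
    note ex = this
    define B where "B j = (SOME B. B \<subseteq> W j \<and> pairwise orthogonal B \<and> (\<forall>x\<in>B. norm x = 1) \<and> independent B \<and> card B = dim (W j))" for j
    have B: "\<forall>j\<in>?I. B j \<subseteq> W j \<and> pairwise orthogonal (B j) \<and> (\<forall>x\<in>B j. norm x = 1) \<and> independent (B j) \<and> card (B j) = dim (W j)"
    proof
      fix j assume "j \<in> ?I"
      show "B j \<subseteq> W j \<and> pairwise orthogonal (B j) \<and> (\<forall>x\<in>B j. norm x = 1) \<and> independent (B j) \<and> card (B j) = dim (W j)"
        unfolding B_def by (rule someI_ex, rule bspec[OF ex \<open>j \<in> ?I\<close>])
    qed
    have BW: "\<And>j. j \<in> ?I \<Longrightarrow> B j \<subseteq> W j" and Bpw: "\<And>j. j \<in> ?I \<Longrightarrow> pairwise orthogonal (B j)"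
      and Bn: "\<And>j x. j \<in> ?I \<Longrightarrow> x \<in> B j \<Longrightarrow> norm x = 1" and Bi: "\<And>j. j \<in> ?I \<Longrightarrow> independent (B j)"
      and Bc: "\<And>j. j \<in> ?I \<Longrightarrow> card (B j) = m j"
      using B dm by auto
    have finB: "\<forall>j\<in>?I. finite (B j)" using Bi finiteI_independent by blast
    define C where "C = insert y (\<Union>j\<in>?I. B j)"
    have yB: "y \<notin> (\<Union>j\<in>?I. B j)"
    proof
      assume "y \<in> (\<Union>j\<in>?I. B j)"
      then obtain k where "k \<in> ?I" "y \<in> B k" by blast
      then have "k \<in> ?I" "y \<in> W k" using BW by blast+
      then have "inner y y = 0" using yorth by blast
      then show False using y0 by simp
    qed
    have disj: "\<forall>i\<in>?I. \<forall>j\<in>?I. i \<noteq> j \<longrightarrow> B i \<inter> B j = {}"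
    proof (intro ballI impI)
      fix i j assume ij: "i \<in> ?I" "j \<in> ?I" "i \<noteq> j"
      show "B i \<inter> B j = {}"
      proof (rule ccontr)
        assume "B i \<inter> B j \<noteq> {}"
        then obtain a where a: "a \<in> B i" "a \<in> B j" by blast
        then have "a \<in> W i" "a \<in> W j" using BW ij by blast+
        then have "inner a a = 0" using orth[OF ij] by blast
        moreover have "norm a = 1" using a Bn ij by blast
        ultimately show False by simp
      qed
    qed
    have cardU: "card (\<Union>j\<in>?I. B j) = CARD('n)"
      using card_UN_disjoint[OF _ finB disj] Bc card by simp
    have cardC: "card C = Suc (CARD('n))"
      unfolding C_def using yB finB cardU by simp
    have po: "pairwise orthogonal C"
      unfolding pairwise_def
    proof (intro ballI impI)
      fix a b assume a: "a \<in> C" and b: "b \<in> C" and ab: "a \<noteq> b"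
      show "orthogonal a b"
      proof (cases "a = y")
        case True
        then obtain k where k: "k \<in> ?I" "b \<in> B k" using b ab C_def by auto
        then have "b \<in> W k" using BW by blast
        then show ?thesis using True yorth[OF k(1)] by (simp add: orthogonal_def)
      next
        case False
        then obtain i where i: "i \<in> ?I" "a \<in> B i" using a C_def by auto
        show ?thesis
        proof (cases "b = y")
          case True
          have "a \<in> W i" using i BW by blast
          then show ?thesis using True yorth[OF i(1)] by (simp add: orthogonal_def inner_commute)
        next
          case False
          then obtain j where j: "j \<in> ?I" "b \<in> B j" using b C_def by auto
          show ?thesis
          proof (cases "i = j")
            case True
            then show ?thesis using i j ab Bpw[OF i(1)] unfolding pairwise_def by blast
          next
            case False
            have "a \<in> W i" "b \<in> W j" using i j BW by blast+
            then show ?thesis using orth[OF i(1) j(1) False] by (simp add: orthogonal_def)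
          qed
        qed
      qed
    qed
    have "0 \<notin> C"
    proof
      assume "0 \<in> C"
      then obtain j where "j \<in> ?I" "0 \<in> B j" using y0 unfolding C_def by auto
      then show False using Bn by force
    qed
    then have "independent C" using pairwise_orthogonal_independent po by blast
    then have "card C \<le> CARD('n)" using independent_bound[of C] by simp
    then show False using cardC by simp
  qed
  show ?thesis
    unfolding matrix_eq
  proof
    fix x :: "real^'n"
    have "(\<Sum>j\<in>?I. proj_mat (W j)) *v x = (\<Sum>j\<in>?I. proj_mat (W j) *v x)" by (rule sum_mat_vec) simp
    also have "\<dots> = (\<Sum>j\<in>?I. orth_proj (W j) x)" by (rule sum.cong) (simp_all add: proj_mat_mult sub)
    also have "\<dots> = x" by (rule key)
    finally show "(\<Sum>j\<in>?I. proj_mat (W j)) *v x = mat 1 *v x" by simp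
  qed
qed

lemma minner_def2: "inner (A::real^'n^'m) B = (\<Sum>i\<in>UNIV. \<Sum>j\<in>UNIV. A$i$j * B$i$j)"
  by (simp add: inner_vec_def)

lemma swap3: "(\<Sum>i\<in>I. \<Sum>k\<in>K. \<Sum>j\<in>J. f i j k) = (\<Sum>j\<in>J. \<Sum>k\<in>K. \<Sum>i\<in>I. (f i j k::real))"
proof -
  have "(\<Sum>i\<in>I. \<Sum>k\<in>K. \<Sum>j\<in>J. f i j k) = (\<Sum>i\<in>I. \<Sum>j\<in>J. \<Sum>k\<in>K. f i j k)"
    by (rule sum.cong[OF refl], rule sum.swap)
  also have "\<dots> = (\<Sum>j\<in>J. \<Sum>i\<in>I. \<Sum>k\<in>K. f i j k)" by (rule sum.swap)
  also have "\<dots> = (\<Sum>j\<in>J. \<Sum>k\<in>K. \<Sum>i\<in>I. f i j k)"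
    by (rule sum.cong[OF refl], rule sum.swap)
  finally show ?thesis .
qed

lemma minner_mult_left: "inner ((A::real^'n^'n) ** B) C = inner B (transpose A ** C)"
proof -
  have l: "inner (A**B) C = (\<Sum>i\<in>UNIV. \<Sum>k\<in>UNIV. \<Sum>j\<in>UNIV. A$i$j * B$j$k * C$i$k)"
    unfolding minner_def2 matrix_matrix_mult_def by (simp add: sum_distrib_right)
  have r: "inner B (transpose A ** C) = (\<Sum>j\<in>UNIV. \<Sum>k\<in>UNIV. \<Sum>i\<in>UNIV. A$i$j * B$j$k * C$i$k)"
    unfolding minner_def2 matrix_matrix_mult_def transpose_def by (simp add: sum_distrib_left mult_ac)
  show ?thesis unfolding l r by (rule swap3)
qed

lemma minner_mult_right: "inner ((A::real^'n^'n) ** B) C = inner A (C ** transpose B)"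
proof -
  have l: "inner (A**B) C = (\<Sum>i\<in>UNIV. \<Sum>k\<in>UNIV. \<Sum>j\<in>UNIV. A$i$j * B$j$k * C$i$k)"
    unfolding minner_def2 matrix_matrix_mult_def by (simp add: sum_distrib_right)
  have r: "inner A (C ** transpose B) = (\<Sum>i\<in>UNIV. \<Sum>j\<in>UNIV. \<Sum>k\<in>UNIV. A$i$j * B$j$k * C$i$k)"
    unfolding minner_def2 matrix_matrix_mult_def transpose_def by (simp add: sum_distrib_left mult_ac)
  show ?thesis unfolding l r by (rule sum.cong[OF refl], rule sum.swap)
qed

lemma minner_transpose: "inner (transpose (A::real^'n^'n)) (transpose B) = inner A B"
proof -
  have "inner (transpose A) (transpose B) = (\<Sum>i\<in>UNIV. \<Sum>j\<in>UNIV. A$j$i * B$j$i)"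
    unfolding minner_def2 transpose_def by simp
  also have "\<dots> = (\<Sum>j\<in>UNIV. \<Sum>i\<in>UNIV. A$j$i * B$j$i)" by (rule sum.swap)
  finally show ?thesis unfolding minner_def2 .
qed

lemma mm_add_r: "((A::real^'n^'n) + B) ** C = A ** C + B ** C"
  by (simp add: matrix_matrix_mult_def vec_eq_iff distrib_right sum.distrib)
lemma mm_diff_l: "(A::real^'n^'n) ** (B - C) = A ** B - A ** C"
  by (simp add: matrix_matrix_mult_def vec_eq_iff right_diff_distrib sum_subtractf)
lemma mm_diff_r: "((A::real^'n^'n) - B) ** C = A ** C - B ** C"
  by (simp add: matrix_matrix_mult_def vec_eq_iff left_diff_distrib sum_subtractf)
lemma mm_neg_l: "(- (A::real^'n^'n)) ** B = - (A ** B)"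
  by (simp add: matrix_matrix_mult_def vec_eq_iff sum_negf)
lemma mm_neg_r: "(A::real^'n^'n) ** (- B) = - (A ** B)"
  by (simp add: matrix_matrix_mult_def vec_eq_iff sum_negf)
lemma mm_zero_l: "(0::real^'n^'n) ** B = 0"
  by (simp add: matrix_matrix_mult_def vec_eq_iff)
lemma mm_zero_r: "(A::real^'n^'n) ** 0 = 0"
  by (simp add: matrix_matrix_mult_def vec_eq_iff)
lemma mm_sum_l: "finite S \<Longrightarrow> (X::real^'n^'n) ** sum (f::'b \<Rightarrow> real^'n^'n) S = (\<Sum>l\<in>S. X ** f l)"
  by (induction S rule: finite_induct) (simp_all add: mm_zero_r matrix_add_ldistrib)
lemma mm_sum_r: "finite S \<Longrightarrow> sum (f::'b \<Rightarrow> real^'n^'n) S ** (X::real^'n^'n) = (\<Sum>l\<in>S. f l ** X)"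
  by (induction S rule: finite_induct) (simp_all add: mm_zero_l mm_add_r)
lemma transpose_neg: "transpose (- (A::real^'n^'n)) = - transpose A"
  by (simp add: transpose_def vec_eq_iff)
lemma transpose_diff: "transpose ((A::real^'n^'n) - B) = transpose A - transpose B"
  by (simp add: transpose_def vec_eq_iff)
lemma minner_transpose_r: "inner (X::real^'n^'n) (transpose Y) = inner (transpose X) Y"
  using minner_transpose[of "transpose X" Y] by simp

lemma stat_algebra:
  fixes P D A :: "nat \<Rightarrow> real^'n^'n" and I :: "nat set"
  assumes fin: "finite I"
   and Psym: "\<And>j. j\<in>I \<Longrightarrow> transpose (P j) = P j"
   and Dsym: "\<And>j. j\<in>I \<Longrightarrow> transpose (D j) = D j"
   and Asym: "\<And>j. j\<in>I \<Longrightarrow> transpose (A j) = A j"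
   and PP: "\<And>j k. j\<in>I \<Longrightarrow> k\<in>I \<Longrightarrow> P j ** P k = (if j = k then P j else 0)"
   and DP: "\<And>j k. j\<in>I \<Longrightarrow> k\<in>I \<Longrightarrow> D j ** P k + P j ** D k = (if j = k then D j else 0)"
   and Psum: "sum P I = mat 1"
   and pair: "\<And>j l. j\<in>I \<Longrightarrow> l\<in>I \<Longrightarrow> j \<noteq> l \<Longrightarrow> P j ** (A j - A l) ** P l = 0"
  shows "(\<Sum>j\<in>I. inner (A j - P j) (D j)) = 0"
proof -
  define M where "M j l = P j ** D j ** P l" for j l
  have PD0: "inner (P j) (D j) = 0" if j: "j \<in> I" for j
  proof -
    have e: "D j ** P j + P j ** D j = D j" using DP[OF j j] by simp
    have pp: "P j ** P j = P j" using PP[OF j j] by simp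
    have a: "inner (P j) (P j ** D j) = inner (P j) (D j)"
      using minner_mult_left[of "P j" "D j" "P j"] Psym[OF j] pp by (simp add: inner_commute)
    have b: "inner (P j) (D j ** P j) = inner (P j) (D j)"
      using minner_mult_right[of "D j" "P j" "P j"] Psym[OF j] pp by (simp add: inner_commute)
    have "inner (P j) (D j) = inner (P j) (D j ** P j + P j ** D j)" using e by simp
    also have "\<dots> = 2 * inner (P j) (D j)" using a b by (simp add: inner_add_right)
    finally show ?thesis by simp
  qed
  have PDP: "P j ** D j ** P j = 0" if j: "j \<in> I" for j
  proof -
    have e: "D j ** P j + P j ** D j = D j" using DP[OF j j] by simp
    have pp: "P j ** P j = P j" using PP[OF j j] by simp
    have "P j ** (D j ** P j + P j ** D j) = P j ** D j" using e by simp
    then have "P j ** D j ** P j + P j ** D j = P j ** D j"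
      by (simp add: matrix_add_ldistrib matrix_mul_assoc pp)
    then show ?thesis by simp
  qed
  have AD: "inner (A j) (D j) = 2 * (\<Sum>l\<in>I. inner (A j) (M j l))" if j: "j \<in> I" for j
  proof -
    have e: "D j ** P j + P j ** D j = D j" using DP[OF j j] by simp
    have t: "transpose (D j ** P j) = P j ** D j"
      by (simp add: matrix_transpose_mul Psym[OF j] Dsym[OF j])
    have a: "inner (A j) (D j ** P j) = inner (A j) (P j ** D j)"
      using minner_transpose_r[of "A j" "P j ** D j"] t Asym[OF j]
      by (metis transpose_transpose)
    have "P j ** D j = P j ** D j ** sum P I" by (simp add: Psum)
    also have "\<dots> = (\<Sum>l\<in>I. M j l)" unfolding M_def by (rule mm_sum_l[OF fin])
    finally have s: "P j ** D j = (\<Sum>l\<in>I. M j l)" .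
    have "inner (A j) (D j) = inner (A j) (D j ** P j + P j ** D j)" using e by simp
    also have "\<dots> = 2 * inner (A j) (P j ** D j)" using a by (simp add: inner_add_right)
    also have "\<dots> = 2 * (\<Sum>l\<in>I. inner (A j) (M j l))" unfolding s by (simp add: inner_sum_right)
    finally show ?thesis .
  qed
  have Mswap: "M l j = - transpose (M j l)" if j: "j \<in> I" and l: "l \<in> I" for j l
  proof (cases "j = l")
    case True
    then show ?thesis using PDP[OF j] unfolding M_def by (simp add: transpose_def vec_eq_iff)
  next
    case False
    have e1: "D l ** P j = - (P l ** D j)" using DP[OF l j] False by (simp add: eq_neg_iff_add_eq_0)
    have pl: "P l ** P l = P l" using PP[OF l l] by simp
    have "M l j = P l ** (D l ** P j)" unfolding M_def by (simp add: matrix_mul_assoc)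
    also have "\<dots> = - (P l ** D j)" by (simp add: e1 mm_neg_r matrix_mul_assoc pl)
    also have "P l ** D j = P l ** D j ** sum P I" by (simp add: Psum)
    also have "\<dots> = (\<Sum>k\<in>I. P l ** D j ** P k)" by (rule mm_sum_l[OF fin])
    also have "\<dots> = P l ** D j ** P j"
    proof -
      have z: "P l ** D j ** P k = 0" if k: "k \<in> I" "k \<noteq> j" for k
      proof -
        have "D j ** P k = - (P j ** D k)" using DP[OF j k(1)] k(2) by (simp add: eq_neg_iff_add_eq_0)
        then have "P l ** D j ** P k = - (P l ** P j ** D k)"
          by (simp add: matrix_mul_assoc[symmetric] mm_neg_r)
        also have "P l ** P j = 0" using PP[OF l j] False by simp
        finally show ?thesis by (simp add: mm_zero_l)
      qed
      have "(\<Sum>k\<in>I. P l ** D j ** P k) = P l ** D j ** P j + (\<Sum>k\<in>I - {j}. P l ** D j ** P k)"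
        by (rule sum.remove[OF fin j])
      also have "(\<Sum>k\<in>I - {j}. P l ** D j ** P k) = 0" by (rule sum.neutral) (use z in auto)
      finally show ?thesis by simp
    qed
    also have "P l ** D j ** P j = transpose (M j l)"
      unfolding M_def by (simp add: matrix_transpose_mul Psym[OF j] Psym[OF l] Dsym[OF j] matrix_mul_assoc)
    finally show ?thesis .
  qed
  define S where "S = (\<Sum>j\<in>I. \<Sum>l\<in>I. inner (A j) (M j l))"
  have S1: "S = - (\<Sum>j\<in>I. \<Sum>l\<in>I. inner (A l) (M j l))"
  proof -
    have "S = (\<Sum>j\<in>I. \<Sum>l\<in>I. - inner (A j) (M l j))"
      unfolding S_def
    proof (intro sum.cong refl)
      fix j l assume j: "j \<in> I" and l: "l \<in> I"
      have "M j l = - transpose (M l j)" using Mswap[OF l j] .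
      then have "inner (A j) (M j l) = - inner (A j) (transpose (M l j))" by (simp add: inner_minus_right)
      also have "\<dots> = - inner (A j) (M l j)" using minner_transpose_r[of "A j" "M l j"] Asym[OF j] by simp
      finally show "inner (A j) (M j l) = - inner (A j) (M l j)" .
    qed
    also have "\<dots> = - (\<Sum>j\<in>I. \<Sum>l\<in>I. inner (A j) (M l j))" by (simp add: sum_negf)
    also have "(\<Sum>j\<in>I. \<Sum>l\<in>I. inner (A j) (M l j)) = (\<Sum>l\<in>I. \<Sum>j\<in>I. inner (A j) (M l j))"
      by (rule sum.swap)
    finally show ?thesis .
  qed
  have S2: "2 * S = (\<Sum>j\<in>I. \<Sum>l\<in>I. inner (A j - A l) (M j l))"
  proof -
    have "2 * S = S - (- S)" by simp
    also have "\<dots> = (\<Sum>j\<in>I. \<Sum>l\<in>I. inner (A j) (M j l)) - (\<Sum>j\<in>I. \<Sum>l\<in>I. inner (A l) (M j l))"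
      using S1 unfolding S_def by simp
    also have "\<dots> = (\<Sum>j\<in>I. \<Sum>l\<in>I. inner (A j - A l) (M j l))"
      by (simp add: sum_subtractf inner_diff_left)
    finally show ?thesis .
  qed
  have S0: "S = 0"
  proof -
    have "inner (A j - A l) (M j l) = 0" if j: "j \<in> I" and l: "l \<in> I" for j l
    proof (cases "j = l")
      case True then show ?thesis by simp
    next
      case False
      have "inner (A j - A l) (M j l) = inner (M j l) (A j - A l)" by (rule inner_commute)
      also have "\<dots> = inner (P j ** D j) ((A j - A l) ** transpose (P l))"
        unfolding M_def by (rule minner_mult_right)
      also have "\<dots> = inner (D j) (transpose (P j) ** ((A j - A l) ** transpose (P l)))"
        by (rule minner_mult_left)
      also have "\<dots> = inner (D j) (P j ** (A j - A l) ** P l)"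
        by (simp add: Psym[OF j] Psym[OF l] matrix_mul_assoc)
      also have "\<dots> = 0" using pair[OF j l False] by simp
      finally show ?thesis .
    qed
    then have "(\<Sum>j\<in>I. \<Sum>l\<in>I. inner (A j - A l) (M j l)) = 0" by (simp add: sum.neutral)
    then show ?thesis using S2 by simp
  qed
  have "(\<Sum>j\<in>I. inner (A j) (D j)) = 2 * S"
    unfolding S_def by (simp add: AD sum_distrib_left)
  moreover have "(\<Sum>j\<in>I. inner (P j) (D j)) = 0" by (simp add: PD0)
  ultimately show ?thesis using S0 by (simp add: inner_diff_left sum_subtractf)
qed

lemma frob_norm_eq: "frob_norm (A::real^'n^'n) = norm A"
  unfolding frob_norm_def norm_eq_sqrt_inner minner_def2 by (simp add: power2_eq_square)

lemma tau_diff: "tau U - tau W = 2 *\<^sub>R (proj_mat U - proj_mat (W::(real^'n) set))"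
  unfolding tau_def by (simp add: scaleR_diff_right)

lemma objF_eq: "objF U d W = (\<Sum>j=1..d+1. 4 * inner (proj_mat (U j) - proj_mat (W j)) (proj_mat (U j) - proj_mat (W j :: (real^'n) set)))"
  unfolding objF_def frob_norm_eq tau_diff
  by (simp add: power2_norm_eq_inner)

lemma bl_transpose: "bounded_linear (transpose :: real^'n^'n \<Rightarrow> real^'n^'n)"
  unfolding linear_conv_bounded_linear[symmetric]
  by (rule linearI) (simp_all add: transpose_def vec_eq_iff)

lemma bb_mm: "bounded_bilinear ((**) :: real^'n^'n \<Rightarrow> real^'n^'n \<Rightarrow> real^'n^'n)"
  unfolding bilinear_conv_bounded_bilinear[symmetric] bilinear_def
proof (intro conjI allI)
  fix x :: "real^'n^'n"
  show "linear ((**) x)"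
    by (rule linearI) (simp_all add: matrix_add_ldistrib matrix_scalar_ac scalar_matrix_assoc[symmetric])
  show "linear (\<lambda>y::real^'n^'n. y ** x)"
    by (rule linearI) (simp_all add: mm_add_r scalar_matrix_assoc[symmetric])
qed

lemma flag_PP:
  assumes fl: "W \<in> flags m d" and j: "j \<in> {1..d+1}" and k: "k \<in> {1..d+1}"
  shows "proj_mat (W j) ** proj_mat (W k) = (if j = k then proj_mat (W j) else (0::real^'n^'n))"
proof (cases "j = k")
  case True then show ?thesis using proj_mat_idem[OF flagsD(1)[OF fl j]] by simp
next
  case False
  have "\<forall>x\<in>W j. \<forall>y\<in>W k. orthogonal x y" using flagsD(3)[OF fl j k False] unfolding orthogonal_def by blast
  then show ?thesis using proj_mat_orth[OF flagsD(1)[OF fl j] flagsD(1)[OF fl k]] False by simp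
qed

lemma stationary_of_pair:
  fixes U W :: "nat \<Rightarrow> (real^'n) set"
  assumes fl: "W \<in> flags m d" and card: "CARD('n) = (\<Sum>j=1..d+1. m j)"
    and Usub: "\<And>j. j \<in> {1..d+1} \<Longrightarrow> subspace (U j)"
    and pair: "\<And>j l. j \<in> {1..d+1} \<Longrightarrow> l \<in> {1..d+1} \<Longrightarrow> j \<noteq> l \<Longrightarrow>
       proj_mat (W j) ** (proj_mat (U j) - proj_mat (U l)) ** proj_mat (W l) = 0"
  shows "stationary m d U W"
  unfolding stationary_def
proof (intro conjI allI impI)
  show "W \<in> flags m d" by (rule fl)
  fix \<gamma> :: "real \<Rightarrow> nat \<Rightarrow> (real^'n) set"
  assume h: "(\<forall>x. \<gamma> x \<in> flags m d) \<and> \<gamma> 0 = W \<and> (\<forall>j\<in>{1..d+1}. (\<lambda>x. proj_mat (\<gamma> x j)) differentiable (at 0))"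
  let ?I = "{1..d+1::nat}"
  have gfl: "\<gamma> x \<in> flags m d" for x using h by blast
  define P where "P j = (\<lambda>x. proj_mat (\<gamma> x j))" for j
  define D where "D j = vector_derivative (P j) (at 0)" for j
  define A where "A j = proj_mat (U j)" for j
  have dP: "(P j has_vector_derivative D j) (at 0)" if j: "j \<in> ?I" for j
  proof -
    have "P j differentiable (at 0)" using h j unfolding P_def by blast
    then show ?thesis unfolding D_def by (simp add: vector_derivative_works[symmetric])
  qed
  have P0: "P j 0 = proj_mat (W j)" for j by (simp add: P_def h)
  have Dsym: "transpose (D j) = D j" if j: "j \<in> ?I" for j
  proof -
    have a: "((\<lambda>x. transpose (P j x)) has_vector_derivative transpose (D j)) (at 0)"
      by (rule bounded_linear.has_vector_derivative[OF bl_transpose dP[OF j]])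
    have "(\<lambda>x. transpose (P j x)) = P j"
      unfolding P_def using proj_mat_sym[OF flagsD(1)[OF gfl j]] by simp
    then show ?thesis using a dP[OF j] vector_derivative_unique_at by metis
  qed
  have DP: "D j ** P k 0 + P j 0 ** D k = (if j = k then D j else 0)" if j: "j \<in> ?I" and k: "k \<in> ?I" for j k
  proof -
    have a: "((\<lambda>x. P j x ** P k x) has_vector_derivative (P j 0 ** D k + D j ** P k 0)) (at 0)"
      by (rule bounded_bilinear.has_vector_derivative[OF bb_mm dP[OF j] dP[OF k]])
    have e: "(\<lambda>x. P j x ** P k x) = (\<lambda>x. if j = k then P j x else 0)"
      unfolding P_def using flag_PP[OF gfl j k] by simp
    have b: "((\<lambda>x. if j = k then P j x else 0) has_vector_derivative (if j = k then D j else 0)) (at 0)"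
      using dP[OF j] by (cases "j = k") simp_all
    have "P j 0 ** D k + D j ** P k 0 = (if j = k then D j else 0)"
      using vector_derivative_unique_at[OF a[unfolded e] b] .
    then show ?thesis by (simp add: add.commute)
  qed
  have alg: "(\<Sum>j\<in>?I. inner (A j - P j 0) (D j)) = 0"
  proof (rule stat_algebra)
    show "finite ?I" by simp
    show "transpose (P j 0) = P j 0" if "j \<in> ?I" for j
      unfolding P0 by (rule proj_mat_sym[OF flagsD(1)[OF fl that]])
    show "transpose (D j) = D j" if "j \<in> ?I" for j by (rule Dsym[OF that])
    show "transpose (A j) = A j" if "j \<in> ?I" for j
      unfolding A_def by (rule proj_mat_sym[OF Usub[OF that]])
    show "P j 0 ** P k 0 = (if j = k then P j 0 else 0)" if "j \<in> ?I" "k \<in> ?I" for j k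
      unfolding P0 by (rule flag_PP[OF fl that])
    show "D j ** P k 0 + P j 0 ** D k = (if j = k then D j else 0)" if "j \<in> ?I" "k \<in> ?I" for j k
      by (rule DP[OF that])
    show "sum (\<lambda>j. P j 0) ?I = mat 1" unfolding P0 by (rule proj_sum_id[OF fl card])
    show "P j 0 ** (A j - A l) ** P l 0 = 0" if "j \<in> ?I" "l \<in> ?I" "j \<noteq> l" for j l
      unfolding P0 A_def by (rule pair[OF that])
  qed
  have obj: "(\<lambda>x. objF U d (\<gamma> x)) = (\<lambda>x. \<Sum>j\<in>?I. 4 * inner (A j - P j x) (A j - P j x))"
    unfolding objF_eq A_def P_def by simp
  have der: "((\<lambda>x. \<Sum>j\<in>?I. 4 * inner (A j - P j x) (A j - P j x)) has_real_derivative
      (\<Sum>j\<in>?I. 4 * (- 2 * inner (A j - P j 0) (D j)))) (at 0)"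
  proof (rule DERIV_sum)
    fix j assume j: "j \<in> ?I"
    have d1: "((\<lambda>x. A j - P j x) has_vector_derivative - D j) (at 0)"
      using has_vector_derivative_diff[OF has_vector_derivative_const dP[OF j]] by simp
    have "((\<lambda>x. inner (A j - P j x) (A j - P j x)) has_vector_derivative
        (inner (A j - P j 0) (- D j) + inner (- D j) (A j - P j 0))) (at 0)"
      by (rule bounded_bilinear.has_vector_derivative[OF bounded_bilinear_inner d1 d1])
    then have "((\<lambda>x. inner (A j - P j x) (A j - P j x)) has_real_derivative
        (- 2 * inner (A j - P j 0) (D j))) (at 0)"
      unfolding has_real_derivative_iff_has_vector_derivative by (simp add: inner_commute)
    then show "((\<lambda>x. 4 * inner (A j - P j x) (A j - P j x)) has_real_derivative
        4 * (- 2 * inner (A j - P j 0) (D j))) (at 0)"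
      by (rule DERIV_cmult)
  qed
  have "(\<Sum>j\<in>?I. 4 * (- 2 * inner (A j - P j 0) (D j))) = -8 * (\<Sum>j\<in>?I. inner (A j - P j 0) (D j))"
    unfolding sum_distrib_left by (rule sum.cong) simp_all
  also have "\<dots> = 0" using alg by simp
  finally show "((\<lambda>x. objF U d (\<gamma> x)) has_real_derivative 0) (at 0)" using der unfolding obj by simp
qed

definition outer :: "real^'n \<Rightarrow> real^'n \<Rightarrow> real^'n^'n" where
  "outer a b = (\<chi> i j. a$i * b$j)"

lemma outer_mv: "outer a b *v y = (inner b y) *\<^sub>R a"
  by (simp add: outer_def matrix_vector_mult_def vec_eq_iff inner_vec_def sum_distrib_left mult_ac)

lemma inner_outer: "inner M (outer a b) = inner a (M *v b)"
  by (simp add: outer_def minner_def2 matrix_vector_mult_def inner_vec_def sum_distrib_left mult_ac)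

lemma inner_outer_outer: "inner (outer a b) (outer c d) = inner a c * inner (b::real^'n) d"
proof -
  have "inner (outer a b) (outer c d) = (\<Sum>i\<in>UNIV. \<Sum>j\<in>UNIV. a $ i * (b $ j * (c $ i * d $ j)))"
    by (simp add: outer_def minner_def2 mult_ac)
  also have "\<dots> = (\<Sum>j\<in>UNIV. \<Sum>i\<in>UNIV. a $ i * (b $ j * (c $ i * d $ j)))" by (rule sum.swap)
  also have "\<dots> = inner a c * inner b d"
    by (simp add: inner_vec_def sum_distrib_left sum_distrib_right mult_ac)
  finally show ?thesis .
qed

lemma smv: "(c *\<^sub>R (M::real^'n^'n)) *v y = c *\<^sub>R (M *v y)"
  by (simp add: matrix_vector_mult_def vec_eq_iff sum_distrib_left mult_ac)

lemma sym_mv: "transpose A = A \<Longrightarrow> inner x (A *v y) = inner y ((A::real^'n^'n) *v x)"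
  by (metis dot_lmul_matrix inner_commute transpose_matrix_vector)

definition hrefl :: "real^'n \<Rightarrow> real^'n \<Rightarrow> real^'n" where
  "hrefl w y = y - (2 * inner w y) *\<^sub>R w"

lemma hrefl_invol: "norm w = 1 \<Longrightarrow> hrefl w (hrefl w y) = y"
  unfolding hrefl_def by (simp add: inner_diff_right power2_norm_eq_inner[symmetric] algebra_simps)

lemma hrefl_inner: "norm w = 1 \<Longrightarrow> inner (hrefl w x) (hrefl w y) = inner x y"
  unfolding hrefl_def
  by (simp add: inner_diff_right inner_diff_left power2_norm_eq_inner[symmetric] algebra_simps inner_commute)

lemma hrefl_linear: "linear (hrefl w)"
  unfolding hrefl_def by (rule linearI) (simp_all add: inner_add_right algebra_simps)

lemma hrefl_fix: "inner w y = 0 \<Longrightarrow> hrefl w y = y"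
  unfolding hrefl_def by simp

lemma hrefl_inj: "norm w = 1 \<Longrightarrow> inj (hrefl w)"
proof (rule injI)
  fix x y assume "norm w = 1" "hrefl w x = hrefl w y"
  then have "hrefl w (hrefl w x) = hrefl w (hrefl w y)" by simp
  then show "x = y" using hrefl_invol[OF \<open>norm w = 1\<close>] by simp
qed

lemma hrefl_image_subspace: "subspace V \<Longrightarrow> subspace (hrefl w ` V)"
  by (rule linear_subspace_image[OF hrefl_linear])

lemma hrefl_image_dim: "norm w = 1 \<Longrightarrow> dim (hrefl w ` V) = dim V"
  by (rule dim_image_eq[OF hrefl_linear]) (use hrefl_inj in \<open>auto simp: inj_on_def\<close>)

lemma hrefl_image_fix:
  assumes "\<And>y. y \<in> V \<Longrightarrow> inner w y = 0"
  shows "hrefl w ` V = V"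
proof -
  have "hrefl w ` V = (\<lambda>y. y) ` V" by (rule image_cong) (simp_all add: hrefl_fix assms)
  then show ?thesis by simp
qed

lemma hrefl_orth_proj:
  assumes V: "subspace V" and w: "norm w = 1"
  shows "orth_proj (hrefl w ` V) x = hrefl w (orth_proj V (hrefl w x))"
proof (rule orth_proj_eqI[OF hrefl_image_subspace[OF V]])
  show "hrefl w (orth_proj V (hrefl w x)) \<in> hrefl w ` V" using orth_proj(1)[OF V] by blast
  fix z assume "z \<in> hrefl w ` V"
  then obtain v where v: "v \<in> V" "z = hrefl w v" by blast
  have "inner (x - hrefl w (orth_proj V (hrefl w x))) z
      = inner (hrefl w (hrefl w x) - hrefl w (orth_proj V (hrefl w x))) (hrefl w v)"
    using v hrefl_invol[OF w] by simp
  also have "\<dots> = inner (hrefl w x - orth_proj V (hrefl w x)) v"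
  proof -
    have ld: "hrefl w (hrefl w x) - hrefl w (orth_proj V (hrefl w x)) = hrefl w (hrefl w x - orth_proj V (hrefl w x))"
      by (rule linear_diff[OF hrefl_linear, symmetric])
    show ?thesis by (simp only: ld hrefl_inner[OF w])
  qed
  also have "\<dots> = 0" using orth_proj(2)[OF V] v by blast
  finally show "inner (x - hrefl w (orth_proj V (hrefl w x))) z = 0" .
qed

lemma hrefl_proj_mat:
  fixes V :: "(real^'n) set"
  assumes V: "subspace V" and w: "norm w = 1" and Pw: "orth_proj V w = \<alpha> *\<^sub>R u" and uw: "inner u w = \<alpha>"
  shows "proj_mat (hrefl w ` V) = proj_mat V + ((-2*\<alpha>) *\<^sub>R (outer w u + outer u w) + (4*\<alpha>^2) *\<^sub>R outer w w)"
  unfolding matrix_eq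
proof
  fix y :: "real^'n"
  have lin: "linear (orth_proj V)" by (rule orth_proj_linear[OF V])
  have a: "orth_proj V (hrefl w y) = orth_proj V y - (2 * inner w y * \<alpha>) *\<^sub>R u"
    unfolding hrefl_def using linear_diff[OF lin] linear_scale[OF lin] Pw by simp
  have b: "inner w (orth_proj V y) = \<alpha> * inner u y"
    using orth_proj_selfadj[OF V, of w y] Pw by (simp add: inner_commute)
  have c: "inner w u = \<alpha>" using uw by (simp add: inner_commute)
  have "proj_mat (hrefl w ` V) *v y = hrefl w (orth_proj V (hrefl w y))"
    by (simp add: proj_mat_mult[OF hrefl_image_subspace[OF V]] hrefl_orth_proj[OF V w])
  also have "\<dots> = orth_proj V (hrefl w y) - (2 * inner w (orth_proj V (hrefl w y))) *\<^sub>R w"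
    by (simp only: hrefl_def[of w "orth_proj V (hrefl w y)"])
  also have "\<dots> = orth_proj V y - (2 * inner w y * \<alpha>) *\<^sub>R u
       - (2 * (\<alpha> * inner u y - 2 * inner w y * \<alpha> * \<alpha>)) *\<^sub>R w"
    unfolding a by (simp add: inner_diff_right b c)
  also have "\<dots> = (proj_mat V + ((-2*\<alpha>) *\<^sub>R (outer w u + outer u w) + (4*\<alpha>^2) *\<^sub>R outer w w)) *v y"
    by (simp add: matrix_vector_mult_add_rdistrib smv outer_mv proj_mat_mult[OF V]
        algebra_simps power2_eq_square inner_commute)
  finally show "proj_mat (hrefl w ` V) *v y = (proj_mat V + ((-2*\<alpha>) *\<^sub>R (outer w u + outer u w) + (4*\<alpha>^2) *\<^sub>R outer w w)) *v y" .
qed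

lemma piece:
  fixes V :: "(real^'n) set" and A :: "real^'n^'n"
  assumes V: "subspace V" and u: "u \<in> V" and nu: "norm u = 1" and w: "norm w = 1"
    and Pw: "orth_proj V w = \<alpha> *\<^sub>R u" and uw: "inner u w = \<alpha>" and Asym: "transpose A = A"
  shows "inner (A - proj_mat (hrefl w ` V)) (A - proj_mat (hrefl w ` V))
       = inner (A - proj_mat V) (A - proj_mat V) - 2 * (-4*\<alpha> * inner u (A *v w) + 4*\<alpha>^2 * inner w (A *v w))"
proof -
  define E where "E = (-2*\<alpha>) *\<^sub>R (outer w u + outer u w) + (4*\<alpha>^2) *\<^sub>R outer w w"
  define P where "P = proj_mat V"
  have PE: "proj_mat (hrefl w ` V) = P + E" unfolding P_def E_def by (rule hrefl_proj_mat[OF V w Pw uw])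
  have uu: "inner u u = 1" using nu by (simp add: norm_eq_sqrt_inner)
  have ww: "inner w w = 1" using w by (simp add: norm_eq_sqrt_inner)
  have wu: "inner w u = \<alpha>" using uw by (simp add: inner_commute)
  have Pu: "P *v u = u" unfolding P_def by (simp add: proj_mat_mult[OF V] orth_proj_id[OF V u])
  have Pw': "P *v w = \<alpha> *\<^sub>R u" unfolding P_def by (simp add: proj_mat_mult[OF V] Pw)
  have AE: "inner A E = -4*\<alpha> * inner u (A *v w) + 4*\<alpha>^2 * inner w (A *v w)"
    unfolding E_def using sym_mv[OF Asym, of w u]
    by (simp add: inner_add_right inner_outer algebra_simps)
  have PEv: "inner P E = -4*\<alpha>^2 + 4*\<alpha>^4"
    unfolding E_def by (simp add: inner_add_right inner_outer Pu Pw' wu uu algebra_simps power2_eq_square power4_eq_xxxx)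
  have EE: "inner E E = 8*\<alpha>^2 - 8*\<alpha>^4"
    unfolding E_def by (simp add: inner_add_right inner_add_left inner_outer_outer wu uw uu ww algebra_simps power2_eq_square power4_eq_xxxx)
  have "inner (A - (P + E)) (A - (P + E)) = inner (A - P) (A - P) - 2 * inner A E + 2 * inner P E + inner E E"
    by (simp add: inner_diff_left inner_diff_right inner_add_left inner_add_right inner_commute algebra_simps)
  then show ?thesis unfolding PE P_def[symmetric] using AE PEv EE by simp
qed

definition gainf :: "real^'n^'n \<Rightarrow> real^'n^'n \<Rightarrow> real \<Rightarrow> real \<Rightarrow> real^'n \<Rightarrow> real^'n \<Rightarrow> real" where
  "gainf As At \<alpha> \<beta> u v = (-4*\<alpha> * inner u (As *v (\<alpha> *\<^sub>R u + \<beta> *\<^sub>R v)) + 4*\<alpha>^2 * inner (\<alpha> *\<^sub>R u + \<beta> *\<^sub>R v) (As *v (\<alpha> *\<^sub>R u + \<beta> *\<^sub>R v)))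
     + (-4*\<beta> * inner v (At *v (\<alpha> *\<^sub>R u + \<beta> *\<^sub>R v)) + 4*\<beta>^2 * inner (\<alpha> *\<^sub>R u + \<beta> *\<^sub>R v) (At *v (\<alpha> *\<^sub>R u + \<beta> *\<^sub>R v)))"

lemma competitor:
  fixes W U :: "nat \<Rightarrow> (real^'n) set"
  assumes fl: "W \<in> flags m d" and s: "s \<in> {1..d+1}" and t: "t \<in> {1..d+1}" and st: "s \<noteq> t"
    and u: "u \<in> W s" and nu: "norm u = 1" and v: "v \<in> W t" and nv: "norm v = 1" and ab: "\<alpha>^2 + \<beta>^2 = 1"
    and Usub: "\<And>j. j \<in> {1..d+1} \<Longrightarrow> subspace (U j)"
  shows "\<exists>X\<in>coord_feasible m d W s t. objF U d X = objF U d W - 8 * gainf (proj_mat (U s)) (proj_mat (U t)) \<alpha> \<beta> u v"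
proof -
  let ?I = "{1..d+1::nat}"
  define w where "w = \<alpha> *\<^sub>R u + \<beta> *\<^sub>R v"
  note sub = flagsD(1)[OF fl] and dm = flagsD(2)[OF fl] and orth = flagsD(3)[OF fl]
  have uv: "inner u v = 0" using orth[OF s t st u v] .
  have uu: "inner u u = 1" using nu by (simp add: norm_eq_sqrt_inner)
  have vv: "inner v v = 1" using nv by (simp add: norm_eq_sqrt_inner)
  have ww: "inner w w = 1" unfolding w_def using uv uu vv ab
    by (simp add: inner_add_left inner_add_right inner_commute power2_eq_square)
  have nw: "norm w = 1" using ww by (simp add: norm_eq_sqrt_inner)
  define X where "X j = (if j = s \<or> j = t then hrefl w ` W j else W j)" for j
  have XI: "X j = hrefl w ` W j" if j: "j \<in> ?I" for j
  proof (cases "j = s \<or> j = t")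
    case True then show ?thesis unfolding X_def by simp
  next
    case False
    have "inner w y = 0" if y: "y \<in> W j" for y
    proof -
      have "inner u y = 0" using orth[OF s j _ u y] False by auto
      moreover have "inner v y = 0" using orth[OF t j _ v y] False by auto
      ultimately show ?thesis unfolding w_def by (simp add: inner_add_left)
    qed
    then show ?thesis unfolding X_def using False hrefl_image_fix by metis
  qed
  have Xfl: "X \<in> flags m d"
    unfolding flags_def
  proof (intro CollectI conjI ballI impI)
    fix j assume j: "j \<in> ?I"
    show "subspace (X j)" unfolding XI[OF j] by (rule hrefl_image_subspace[OF sub[OF j]])
    show "dim (X j) = m j" unfolding XI[OF j] hrefl_image_dim[OF nw] by (rule dm[OF j])
  next
    fix i j x y assume i: "i \<in> ?I" and j: "j \<in> ?I" and ij: "i \<noteq> j" and x: "x \<in> X i" and y: "y \<in> X j"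
    obtain a where a: "a \<in> W i" "x = hrefl w a" using x unfolding XI[OF i] by blast
    obtain b where b: "b \<in> W j" "y = hrefl w b" using y unfolding XI[OF j] by blast
    show "orthogonal x y"
      unfolding orthogonal_def a(2) b(2) hrefl_inner[OF nw] by (rule orth[OF i j ij a(1) b(1)])
  qed
  have XC: "X \<in> coord_feasible m d W s t"
    unfolding coord_feasible_def using Xfl by (simp add: X_def)
  define A where "A j = proj_mat (U j)" for j
  define g where "g j = 4 * inner (A j - proj_mat (W j)) (A j - proj_mat (W j))" for j
  define Gs where "Gs = -4*\<alpha> * inner u (A s *v w) + 4*\<alpha>^2 * inner w (A s *v w)"
  define Gt where "Gt = -4*\<beta> * inner v (A t *v w) + 4*\<beta>^2 * inner w (A t *v w)"
  have lin_s: "linear (orth_proj (W s))" by (rule orth_proj_linear[OF sub[OF s]])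
  have lin_t: "linear (orth_proj (W t))" by (rule orth_proj_linear[OF sub[OF t]])
  have Psv: "orth_proj (W s) v = 0"
    by (rule orth_proj_zero[OF sub[OF s]]) (use orth[OF t s _ v] st in \<open>auto\<close>)
  have Ptu: "orth_proj (W t) u = 0"
    by (rule orth_proj_zero[OF sub[OF t]]) (use orth[OF s t st u] in \<open>auto\<close>)
  have Pws: "orth_proj (W s) w = \<alpha> *\<^sub>R u"
    unfolding w_def using linear_add[OF lin_s] linear_scale[OF lin_s] Psv orth_proj_id[OF sub[OF s] u] by simp
  have Pwt: "orth_proj (W t) w = \<beta> *\<^sub>R v"
    unfolding w_def using linear_add[OF lin_t] linear_scale[OF lin_t] Ptu orth_proj_id[OF sub[OF t] v] by simp
  have uw: "inner u w = \<alpha>" unfolding w_def using uu uv by (simp add: inner_add_right)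
  have vw: "inner v w = \<beta>" unfolding w_def using vv uv by (simp add: inner_add_right inner_commute)
  have fs: "4 * inner (A s - proj_mat (X s)) (A s - proj_mat (X s)) = g s - 8 * Gs"
    unfolding g_def Gs_def XI[OF s] A_def
    using piece[OF sub[OF s] u nu nw Pws uw proj_mat_sym[OF Usub[OF s]]] by simp
  have ft: "4 * inner (A t - proj_mat (X t)) (A t - proj_mat (X t)) = g t - 8 * Gt"
    unfolding g_def Gt_def XI[OF t] A_def
    using piece[OF sub[OF t] v nv nw Pwt vw proj_mat_sym[OF Usub[OF t]]] by simp
  have fj: "4 * inner (A j - proj_mat (X j)) (A j - proj_mat (X j)) = g j - (if j = s then 8 * Gs else 0) - (if j = t then 8 * Gt else 0)"
    if j: "j \<in> ?I" for j
    using fs ft st unfolding g_def by (auto simp: X_def)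
  have "objF U d X = (\<Sum>j\<in>?I. 4 * inner (A j - proj_mat (X j)) (A j - proj_mat (X j)))"
    unfolding objF_eq A_def by simp
  also have "\<dots> = (\<Sum>j\<in>?I. g j - (if j = s then 8 * Gs else 0) - (if j = t then 8 * Gt else 0))"
    by (rule sum.cong[OF refl fj])
  also have "\<dots> = (\<Sum>j\<in>?I. g j) - 8 * Gs - 8 * Gt"
    using s t by (simp add: sum_subtractf)
  also have "(\<Sum>j\<in>?I. g j) = objF U d W" unfolding objF_eq g_def A_def by simp
  finally have "objF U d X = objF U d W - 8 * gainf (proj_mat (U s)) (proj_mat (U t)) \<alpha> \<beta> u v"
    unfolding gainf_def Gs_def Gt_def A_def w_def by (simp add: algebra_simps)
  then show ?thesis using XC by blast
qed

lemma gain_expand: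
  assumes As: "transpose As = As" and At: "transpose At = At"
  shows "gainf As At \<alpha> \<beta> u v =
     -4*\<alpha>*(\<alpha>*inner u (As *v u) + \<beta>*inner u (As *v v))
     + 4*\<alpha>^2*(\<alpha>^2*inner u (As *v u) + 2*\<alpha>*\<beta>*inner u (As *v v) + \<beta>^2*inner v (As *v v))
     - 4*\<beta>*(\<alpha>*inner u (At *v v) + \<beta>*inner v (At *v v))
     + 4*\<beta>^2*(\<alpha>^2*inner u (At *v u) + 2*\<alpha>*\<beta>*inner u (At *v v) + \<beta>^2*inner v (At *v v))"
proof -
  have s1: "inner v (As *v u) = inner u (As *v v)" by (rule sym_mv[OF As])
  have s2: "inner v (At *v u) = inner u (At *v v)" by (rule sym_mv[OF At])
  show ?thesis
    unfolding gainf_def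
    by (simp add: matrix_vector_right_distrib matrix_vector_mult_scaleR inner_add_left inner_add_right s1 s2
        algebra_simps power2_eq_square)
qed

lemma gain_identity:
  fixes a b c a' b' c' \<alpha> \<beta> :: real
  assumes "\<alpha>^2 + \<beta>^2 = 1"
  shows "-4*\<alpha>*(\<alpha>*a + \<beta>*b) + 4*\<alpha>^2*(\<alpha>^2*a + 2*\<alpha>*\<beta>*b + \<beta>^2*c)
     - 4*\<beta>*(\<alpha>*b' + \<beta>*c') + 4*\<beta>^2*(\<alpha>^2*a' + 2*\<alpha>*\<beta>*b' + \<beta>^2*c')
     = 4*\<alpha>^2*\<beta>^2*(c - a + a' - c') - 4*\<alpha>*\<beta>*(1 - 2*\<alpha>^2)*(b - b')"
  using assms by algebra

lemma gain_choice:
  fixes g K :: real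
  assumes g: "g \<noteq> 0"
  shows "\<exists>\<alpha> \<beta>. \<alpha>^2 + \<beta>^2 = 1 \<and> 4*\<alpha>^2*\<beta>^2*K - 4*\<alpha>*\<beta>*(1 - 2*\<alpha>^2)*g > 0"
proof -
  define e where "e = min (1/2) (\<bar>g\<bar> / (4*(\<bar>K\<bar>+1)))"
  have e0: "e > 0" using g unfolding e_def by simp
  have e1: "e \<le> 1/2" unfolding e_def by (rule min.cobounded1)
  have eK: "e * \<bar>K\<bar> \<le> \<bar>g\<bar> / 4"
  proof -
    have "e * \<bar>K\<bar> \<le> (\<bar>g\<bar> / (4*(\<bar>K\<bar>+1))) * \<bar>K\<bar>" unfolding e_def by (rule mult_right_mono) auto
    also have "\<dots> = \<bar>g\<bar> / 4 * (\<bar>K\<bar> / (\<bar>K\<bar>+1))" by (simp add: field_simps)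
    also have "\<dots> \<le> \<bar>g\<bar> / 4 * 1" by (rule mult_left_mono) auto
    finally show ?thesis by simp
  qed
  have ee: "e^2 \<le> 1/4" using power_mono[of e "1/2" 2] e0 e1 by (simp add: power2_eq_square)
  define \<beta> where "\<beta> = sqrt (1 - e^2)"
  have b2: "\<beta>^2 = 1 - e^2" unfolding \<beta>_def using ee by simp
  have b0: "\<beta> > 0" unfolding \<beta>_def using ee by simp
  have b1: "\<beta> \<le> 1" unfolding \<beta>_def using e0 by simp
  define \<alpha> where "\<alpha> = (if g > 0 then -e else e)"
  have a2: "\<alpha>^2 = e^2" unfolding \<alpha>_def by simp
  have ag: "\<alpha> * g = - e * \<bar>g\<bar>" unfolding \<alpha>_def by auto
  have T: "(1 - 2*e^2) * \<bar>g\<bar> - e * \<beta> * \<bar>K\<bar> > 0"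
  proof -
    have "\<beta> * (e * \<bar>K\<bar>) \<le> e * \<bar>K\<bar>" using mult_left_le_one_le[of "e*\<bar>K\<bar>" \<beta>] e0 b0 b1 by simp
    then have "e * \<beta> * \<bar>K\<bar> \<le> e * \<bar>K\<bar>" by (simp only: mult_ac)
    moreover have "(1 - 2*e^2) * \<bar>g\<bar> \<ge> 1/2 * \<bar>g\<bar>" by (rule mult_right_mono) (use ee in auto)
    ultimately show ?thesis using eK g by linarith
  qed
  have "4*\<alpha>^2*\<beta>^2*K - 4*\<alpha>*\<beta>*(1 - 2*\<alpha>^2)*g = 4*\<alpha>^2*\<beta>^2*K - 4*\<beta>*(1 - 2*\<alpha>^2)*(\<alpha>*g)"
    by algebra
  also have "\<dots> = 4*e^2*\<beta>^2*K + 4*e*\<beta>*(1 - 2*e^2)*\<bar>g\<bar>"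
    unfolding a2 ag by algebra
  also have "\<dots> \<ge> 4*e*\<beta>*((1 - 2*e^2) * \<bar>g\<bar> - e * \<beta> * \<bar>K\<bar>)"
  proof -
    have "e * \<beta> * (- \<bar>K\<bar>) \<le> e * \<beta> * K" by (rule mult_left_mono) (use e0 b0 in auto)
    then have "- (e * \<beta> * \<bar>K\<bar>) \<le> e * \<beta> * K" by simp
    then have "4*e*\<beta> * (- (e * \<beta> * \<bar>K\<bar>)) \<le> 4*e*\<beta> * (e * \<beta> * K)" using e0 b0 by (intro mult_left_mono) auto
    then show ?thesis by (simp add: algebra_simps power2_eq_square)
  qed
  finally have "4*\<alpha>^2*\<beta>^2*K - 4*\<alpha>*\<beta>*(1 - 2*\<alpha>^2)*g \<ge> 4*e*\<beta>*((1 - 2*e^2) * \<bar>g\<bar> - e * \<beta> * \<bar>K\<bar>)" .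
  moreover have "4*e*\<beta>*((1 - 2*e^2) * \<bar>g\<bar> - e * \<beta> * \<bar>K\<bar>) > 0" using e0 b0 T by simp
  ultimately have pos: "4*\<alpha>^2*\<beta>^2*K - 4*\<alpha>*\<beta>*(1 - 2*\<alpha>^2)*g > 0" by linarith
  have "\<alpha>^2 + \<beta>^2 = 1" using a2 b2 by simp
  with pos show ?thesis by blast
qed

lemma bl_mv: "bounded_linear (\<lambda>M::real^'n^'n. M *v x)"
  unfolding linear_conv_bounded_linear[symmetric]
  by (rule linearI) (simp_all add: matrix_vector_mult_add_rdistrib smv)

lemma tendsto_mv_const[tendsto_intros]: "(f \<longlongrightarrow> l) F \<Longrightarrow> ((\<lambda>x. (A::real^'n^'n) *v f x) \<longlongrightarrow> A *v l) F"
  by (rule bounded_linear.tendsto[OF matrix_vector_mul_bounded_linear])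

lemma unit_norm: "x \<noteq> 0 \<Longrightarrow> norm (inverse (norm x) *\<^sub>R (x::real^'n)) = 1"
  by simp

lemma improve_near:
  fixes Wc :: "nat \<Rightarrow> (real^'n) set" and Wk :: "nat \<Rightarrow> nat \<Rightarrow> (real^'n) set"
  assumes fl: "Wc \<in> flags m d" and s: "s \<in> {1..d+1}" and t: "t \<in> {1..d+1}" and st: "s \<noteq> t"
    and Usub: "\<And>j. j \<in> {1..d+1} \<Longrightarrow> subspace (U j)"
    and hne: "proj_mat (Wc s) ** (proj_mat (U s) - proj_mat (U t)) ** proj_mat (Wc t) \<noteq> 0"
    and flk: "\<And>k. Wk k \<in> flags m d"
    and cs: "(\<lambda>k. proj_mat (Wk k s)) \<longlonglongrightarrow> proj_mat (Wc s)"
    and ct: "(\<lambda>k. proj_mat (Wk k t)) \<longlonglongrightarrow> proj_mat (Wc t)"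
  shows "\<exists>\<delta>>0. eventually (\<lambda>k. \<exists>X\<in>coord_feasible m d (Wk k) s t. objF U d X \<le> objF U d (Wk k) - \<delta>) sequentially"
proof -
  define As where "As = proj_mat (U s)"
  define At where "At = proj_mat (U t)"
  define B where "B = As - At"
  define Ps where "Ps = proj_mat (Wc s)"
  define Pt where "Pt = proj_mat (Wc t)"
  have subs: "subspace (Wc s)" and subt: "subspace (Wc t)" using flagsD(1)[OF fl] s t by auto
  have Ass: "transpose As = As" unfolding As_def by (rule proj_mat_sym[OF Usub[OF s]])
  have Ats: "transpose At = At" unfolding At_def by (rule proj_mat_sym[OF Usub[OF t]])
  have "Ps ** B ** Pt \<noteq> 0" using hne unfolding Ps_def Pt_def B_def As_def At_def .
  then obtain i j where ij: "(Ps ** B ** Pt) $ i $ j \<noteq> 0" by (auto simp: vec_eq_iff)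
  define a where "a = (axis i 1 :: real^'n)"
  define b where "b = (axis j 1 :: real^'n)"
  define pa where "pa = Ps *v a"
  define pb where "pb = Pt *v b"
  have "(Ps ** B ** Pt) $ i $ j = inner (Ps *v (B *v pb)) a"
    unfolding mat_entry_inner pb_def a_def b_def by (simp add: matrix_vector_mul_assoc[symmetric])
  also have "\<dots> = inner (B *v pb) pa"
    unfolding pa_def Ps_def proj_mat_mult[OF subs] by (rule orth_proj_selfadj[OF subs])
  finally have gg: "inner pa (B *v pb) \<noteq> 0" using ij by (simp add: inner_commute)
  have pa0: "pa \<noteq> 0" using gg by auto
  have pb0: "pb \<noteq> 0" using gg by auto
  define u0 where "u0 = inverse (norm pa) *\<^sub>R pa"
  define v0 where "v0 = inverse (norm pb) *\<^sub>R pb"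
  have g0: "inner u0 (B *v v0) \<noteq> 0"
    unfolding u0_def v0_def using gg pa0 pb0 by (simp add: matrix_vector_mult_scaleR)
  define K where "K = inner v0 (As *v v0) - inner u0 (As *v u0) + inner u0 (At *v u0) - inner v0 (At *v v0)"
  obtain \<alpha> \<beta> where ab: "\<alpha>^2 + \<beta>^2 = 1" and pos: "4*\<alpha>^2*\<beta>^2*K - 4*\<alpha>*\<beta>*(1 - 2*\<alpha>^2)*inner u0 (B *v v0) > 0"
    using gain_choice[OF g0, of K] by blast
  define c0 where "c0 = gainf As At \<alpha> \<beta> u0 v0"
  have c0pos: "c0 > 0"
  proof -
    have "c0 = 4*\<alpha>^2*\<beta>^2*K - 4*\<alpha>*\<beta>*(1 - 2*\<alpha>^2)*(inner u0 (As *v v0) - inner u0 (At *v v0))"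
      unfolding c0_def gain_expand[OF Ass Ats] K_def by (rule gain_identity[OF ab])
    also have "inner u0 (As *v v0) - inner u0 (At *v v0) = inner u0 (B *v v0)"
      unfolding B_def by (simp add: matrix_vector_mult_diff_rdistrib inner_diff_right)
    finally show ?thesis using pos by simp
  qed
  define pak where "pak k = proj_mat (Wk k s) *v a" for k
  define pbk where "pbk k = proj_mat (Wk k t) *v b" for k
  define uk where "uk k = inverse (norm (pak k)) *\<^sub>R pak k" for k
  define vk where "vk k = inverse (norm (pbk k)) *\<^sub>R pbk k" for k
  have tpa: "pak \<longlonglongrightarrow> pa" unfolding pak_def pa_def Ps_def by (rule bounded_linear.tendsto[OF bl_mv cs])
  have tpb: "pbk \<longlonglongrightarrow> pb" unfolding pbk_def pb_def Pt_def by (rule bounded_linear.tendsto[OF bl_mv ct])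
  have tu: "uk \<longlonglongrightarrow> u0" unfolding uk_def u0_def by (intro tendsto_intros tpa) (use pa0 in simp)
  have tv: "vk \<longlonglongrightarrow> v0" unfolding vk_def v0_def by (intro tendsto_intros tpb) (use pb0 in simp)
  have tg: "(\<lambda>k. gainf As At \<alpha> \<beta> (uk k) (vk k)) \<longlonglongrightarrow> c0"
    unfolding c0_def gainf_def by (intro tendsto_intros tu tv)
  have ev1: "eventually (\<lambda>k. norm (pak k) > 0) sequentially"
    using order_tendstoD(1)[OF tendsto_norm[OF tpa], of 0] pa0 by simp
  have ev2: "eventually (\<lambda>k. norm (pbk k) > 0) sequentially"
    using order_tendstoD(1)[OF tendsto_norm[OF tpb], of 0] pb0 by simp
  have ev3: "eventually (\<lambda>k. gainf As At \<alpha> \<beta> (uk k) (vk k) > c0 / 2) sequentially"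
    using order_tendstoD(1)[OF tg, of "c0/2"] c0pos by simp
  have "eventually (\<lambda>k. \<exists>X\<in>coord_feasible m d (Wk k) s t. objF U d X \<le> objF U d (Wk k) - 4 * c0) sequentially"
    using ev1 ev2 ev3
  proof eventually_elim
    case (elim k)
    have sks: "subspace (Wk k s)" and skt: "subspace (Wk k t)" using flagsD(1)[OF flk] s t by auto
    have uin: "uk k \<in> Wk k s" unfolding uk_def pak_def proj_mat_mult[OF sks]
      by (rule subspace_scale[OF sks orth_proj(1)[OF sks]])
    have vin: "vk k \<in> Wk k t" unfolding vk_def pbk_def proj_mat_mult[OF skt]
      by (rule subspace_scale[OF skt orth_proj(1)[OF skt]])
    have nu: "norm (uk k) = 1" unfolding uk_def using elim(1) by simp
    have nv: "norm (vk k) = 1" unfolding vk_def using elim(2) by simp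
    obtain X where X: "X \<in> coord_feasible m d (Wk k) s t"
      and oX: "objF U d X = objF U d (Wk k) - 8 * gainf As At \<alpha> \<beta> (uk k) (vk k)"
      using competitor[where U=U, OF flk s t st uin nu vin nv ab Usub] unfolding As_def At_def by blast
    have "objF U d X \<le> objF U d (Wk k) - 4 * c0" using oX elim(3) by simp
    then show ?case using X by blast
  qed
  then show ?thesis using c0pos by (intro exI[of _ "4 * c0"]) simp
qed

lemma snth_to_stream: "snth (to_stream \<omega>) = \<omega>"
  by (simp add: to_stream_def fun_eq_iff)

lemma AE_good:
  fixes E :: "nat\<times>nat \<Rightarrow> nat \<Rightarrow> nat \<Rightarrow> (nat \<Rightarrow> nat\<times>nat) \<Rightarrow> bool" and S :: "(nat\<times>nat) set"
  assumes fin: "finite S" and ne: "S \<noteq> {}"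
    and na: "\<And>p n i \<omega> \<omega>'. (\<forall>k<i. \<omega> k = \<omega>' k) \<Longrightarrow> E p n i \<omega> = E p n i \<omega>'"
  shows "AE \<omega> in PiM UNIV (\<lambda>_. measure_pmf (pmf_of_set S)). (\<forall>i. \<omega> i \<in> S) \<and>
     (\<forall>p n. p \<in> S \<longrightarrow> (\<exists>\<^sub>\<infinity>i. E p n i \<omega>) \<longrightarrow> (\<exists>\<^sub>\<infinity>i. E p n i \<omega> \<and> \<omega> i = p))"
proof -
  define N where "N = pmf_of_set S"
  have sN: "set_pmf N = S" unfolding N_def using fin ne by simp
  have tr: "AE \<omega> in PiM UNIV (\<lambda>_. measure_pmf N). P (to_stream \<omega>)"
    if "AE s in stream_space (measure_pmf N). P s" for P
  proof (rule AE_distrD[where f=to_stream and M="PiM UNIV (\<lambda>_. measure_pmf N)" and M'="stream_space (measure_pmf N)" and P=P, OF measurable_to_stream])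
    show "AE s in distr (PiM UNIV (\<lambda>_. measure_pmf N)) (stream_space (measure_pmf N)) to_stream. P s"
      by (subst stream_space_eq_distr[symmetric]) (rule that)
  qed
  have A1: "AE \<omega> in PiM UNIV (\<lambda>_. measure_pmf N). \<forall>i::nat. \<omega> i \<in> S"
  proof -
    have eqm: "measurable (measure_pmf N) (count_space UNIV) = measurable (count_space UNIV) (count_space (UNIV::bool set))"
      by (rule measurable_cong_sets) simp_all
    have "Measurable.pred (measure_pmf N) (\<lambda>x. x \<in> S)"
      unfolding Measurable.pred_def eqm by simp
    moreover have "AE x in measure_pmf N. x \<in> S" using sN by (simp add: AE_measure_pmf_iff)
    ultimately have "AE s in stream_space (measure_pmf N). stream_all (\<lambda>x. x \<in> S) s"
      by (rule prob_space.AE_stream_all[OF prob_space_measure_pmf])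
    from tr[OF this] show ?thesis by (simp only: stream_all_def snth_to_stream)
  qed
  have A2: "AE \<omega> in PiM UNIV (\<lambda>_. measure_pmf N). (p \<in> S \<longrightarrow> (\<exists>\<^sub>\<infinity>i. E p n i \<omega>) \<longrightarrow> (\<exists>\<^sub>\<infinity>i. E p n i \<omega> \<and> \<omega> i = p))" for p n
  proof (cases "p \<in> S")
    case False then show ?thesis by simp
  next
    case True
    define Es where "Es i s = E p n i (snth s)" for i s
    have nonE: "nonant Es" unfolding nonant_def Es_def
    proof (intro allI impI)
      fix i and s s' :: "(nat\<times>nat) stream" assume st: "stake i s = stake i s'"
      have "\<forall>k<i. snth s k = snth s' k"
      proof (intro allI impI)
        fix k assume "k < i"
        then show "snth s k = snth s' k" using stake_nth[of k i s] stake_nth[of k i s'] st by simp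
      qed
      then show "E p n i (snth s) = E p n i (snth s')" by (rule na)
    qed
    have pp: "pmf N p > 0" unfolding N_def using True fin ne by (simp add: card_gt_0_iff)
    have "AE s in stream_space (measure_pmf N). (\<exists>\<^sub>\<infinity>i. Es i s) \<longrightarrow> (\<exists>\<^sub>\<infinity>i. Es i s \<and> s !! i = p)"
      by (rule AE_hit[OF nonE pp])
    from tr[OF this] show ?thesis using True by (simp add: Es_def snth_to_stream)
  qed
  have "AE \<omega> in PiM UNIV (\<lambda>_. measure_pmf N). \<forall>p n. p \<in> S \<longrightarrow> (\<exists>\<^sub>\<infinity>i. E p n i \<omega>) \<longrightarrow> (\<exists>\<^sub>\<infinity>i. E p n i \<omega> \<and> \<omega> i = p)"
    using A2 by (simp add: AE_all_countable)
  with A1 show ?thesis unfolding N_def by (rule AE_conjI)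
qed

lemma objF_nonneg: "0 \<le> objF U d W"
  unfolding objF_def by (simp add: sum_nonneg)

lemma coord_feasible_sym: "coord_feasible m d W s t = coord_feasible m d W t s"
  unfolding coord_feasible_def by blast

lemma det:
  fixes m :: "nat \<Rightarrow> nat" and d :: nat
    and U :: "nat \<Rightarrow> (real^'n) set"
    and W :: "nat \<Rightarrow> nat \<Rightarrow> (real^'n) set" and \<omega> :: "nat \<Rightarrow> nat \<times> nat"
  assumes card: "CARD('n) = (\<Sum>j=1..d+1. m j)"
    and Usub: "\<And>j. j \<in> {1..d+1} \<Longrightarrow> subspace (U j)"
    and W0: "W 0 \<in> flags m d"
    and step: "\<And>i. \<omega> i \<in> pairs d \<Longrightarrow>
           W (Suc i) \<in> coord_feasible m d (W i) (fst (\<omega> i)) (snd (\<omega> i)) \<and>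
           (\<forall>X\<in>coord_feasible m d (W i) (fst (\<omega> i)) (snd (\<omega> i)). objF U d (W (Suc i)) \<le> objF U d X)"
    and allp: "\<And>i. \<omega> i \<in> pairs d"
    and hit: "\<And>p n. p \<in> pairs d \<Longrightarrow>
        (\<exists>\<^sub>\<infinity>i. \<exists>X\<in>coord_feasible m d (W i) (fst p) (snd p). objF U d X \<le> objF U d (W i) - 1 / real (Suc n)) \<Longrightarrow>
        (\<exists>\<^sub>\<infinity>i. (\<exists>X\<in>coord_feasible m d (W i) (fst p) (snd p). objF U d X \<le> objF U d (W i) - 1 / real (Suc n)) \<and> \<omega> i = p)"
    and cl: "flag_cluster_point m d W Wc"
  shows "stationary m d U Wc"
proof -
  let ?I = "{1..d+1::nat}"
  define E where "E p n i = (\<exists>X\<in>coord_feasible m d (W i) (fst p) (snd p). objF U d X \<le> objF U d (W i) - 1 / real (Suc n))" for p n i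
  have Wfl: "W i \<in> flags m d" for i
  proof (induction i)
    case 0 then show ?case by (rule W0)
  next
    case (Suc i) then show ?case using step[OF allp[of i]] unfolding coord_feasible_def by blast
  qed
  have dec: "objF U d (W (Suc i)) + (if E p n i \<and> \<omega> i = p then 1 / real (Suc n) else 0) \<le> objF U d (W i)" for p n i
  proof (cases "E p n i \<and> \<omega> i = p")
    case True
    then obtain X where X: "X \<in> coord_feasible m d (W i) (fst p) (snd p)" "objF U d X \<le> objF U d (W i) - 1 / real (Suc n)"
      unfolding E_def by blast
    have "objF U d (W (Suc i)) \<le> objF U d X" using step[OF allp[of i]] X(1) True by blast
    then show ?thesis using X(2) True by simp
  next
    case False
    have "W i \<in> coord_feasible m d (W i) (fst (\<omega> i)) (snd (\<omega> i))"
      unfolding coord_feasible_def using Wfl by blast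
    then have "objF U d (W (Suc i)) \<le> objF U d (W i)" using step[OF allp[of i]] by blast
    then show ?thesis unfolding if_not_P[OF False] by simp
  qed
  have cum: "objF U d (W L) + real (\<Sum>i<L. if E p n i \<and> \<omega> i = p then 1 else (0::nat)) / real (Suc n) \<le> objF U d (W 0)" for p n L
  proof (induction L)
    case 0 then show ?case by simp
  next
    case (Suc L)
    have "real (\<Sum>i<Suc L. if E p n i \<and> \<omega> i = p then 1 else (0::nat)) / real (Suc n)
        = real (\<Sum>i<L. if E p n i \<and> \<omega> i = p then 1 else (0::nat)) / real (Suc n) + (if E p n L \<and> \<omega> L = p then 1 / real (Suc n) else 0)"
      by (simp add: add_divide_distrib)
    then show ?case using Suc.IH dec[of L p n] by linarith
  qed
  have fin: "\<not> (\<exists>\<^sub>\<infinity>i. E p n i)" if p: "p \<in> pairs d" for p n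
  proof
    assume inf: "\<exists>\<^sub>\<infinity>i. E p n i"
    have "\<exists>\<^sub>\<infinity>i. E p n i \<and> \<omega> i = p" using hit[OF p, of n] inf unfolding E_def by blast
    then have "infinite {i. E p n i \<and> \<omega> i = p}" unfolding INFM_iff_infinite .
    obtain M :: nat where M: "objF U d (W 0) * real (Suc n) < real M" using reals_Archimedean2 by blast
    obtain L where L: "M \<le> (\<Sum>i<L. if E p n i \<and> \<omega> i = p then 1 else (0::nat))"
      using cnt_unbounded[OF \<open>infinite _\<close>] by blast
    have "real M / real (Suc n) \<le> real (\<Sum>i<L. if E p n i \<and> \<omega> i = p then 1 else (0::nat)) / real (Suc n)"
    proof (rule divide_right_mono)
      show "real M \<le> real (\<Sum>i<L. if E p n i \<and> \<omega> i = p then 1 else (0::nat))" using L by (simp only: of_nat_le_iff)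
    qed simp
    moreover have "objF U d (W 0) < real M / real (Suc n)" using M by (simp add: field_simps)
    ultimately show False using cum[of L p n] objF_nonneg[of U d "W L"] by linarith
  qed
  have Wcfl: "Wc \<in> flags m d" using cl unfolding flag_cluster_point_def by (elim conjE)
  obtain r where r: "strict_mono r"
    and conv0: "\<forall>j\<in>?I. (\<lambda>k. proj_mat (W (r k) j)) \<longlonglongrightarrow> proj_mat (Wc j)"
    using cl unfolding flag_cluster_point_def by (elim conjE exE)
  have conv: "(\<lambda>k. proj_mat (W (r k) j)) \<longlonglongrightarrow> proj_mat (Wc j)" if "j \<in> ?I" for j
    using bspec[OF conv0 that] by simp
  show ?thesis
  proof (rule ccontr)
    assume ns: "\<not> stationary m d U Wc"
    have "\<exists>j l. j \<in> ?I \<and> l \<in> ?I \<and> j \<noteq> l \<and> proj_mat (Wc j) ** (proj_mat (U j) - proj_mat (U l)) ** proj_mat (Wc l) \<noteq> 0"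
    proof (rule ccontr)
      assume nex: "\<not> (\<exists>j l. j \<in> ?I \<and> l \<in> ?I \<and> j \<noteq> l \<and> proj_mat (Wc j) ** (proj_mat (U j) - proj_mat (U l)) ** proj_mat (Wc l) \<noteq> 0)"
      have "stationary m d U Wc"
      proof (rule stationary_of_pair[OF Wcfl card Usub])
        fix j l assume "j \<in> ?I" "l \<in> ?I" "j \<noteq> l"
        then show "proj_mat (Wc j) ** (proj_mat (U j) - proj_mat (U l)) ** proj_mat (Wc l) = 0" using nex by blast
      qed
      then show False using ns by blast
    qed
    then obtain j l where j: "j \<in> ?I" and l: "l \<in> ?I" and jl: "j \<noteq> l"
      and hne: "proj_mat (Wc j) ** (proj_mat (U j) - proj_mat (U l)) ** proj_mat (Wc l) \<noteq> 0" by blast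
    obtain \<delta> where \<delta>: "\<delta> > 0" and ev: "eventually (\<lambda>k. \<exists>X\<in>coord_feasible m d (W (r k)) j l. objF U d X \<le> objF U d (W (r k)) - \<delta>) sequentially"
      using improve_near[OF Wcfl j l jl Usub hne Wfl conv[OF j] conv[OF l]] by blast
    define p where "p = (min j l, max j l)"
    have p: "p \<in> pairs d" using j l jl unfolding p_def pairs_def by auto
    have cf: "coord_feasible m d V (fst p) (snd p) = coord_feasible m d V j l" for V
      unfolding p_def by (cases "j \<le> l") (simp_all add: min_def max_def coord_feasible_sym)
    obtain n where n: "inverse (real (Suc n)) < \<delta>" using reals_Archimedean[OF \<delta>] by blast
    have ev1: "eventually (\<lambda>k. E p n (r k)) sequentially"
      using ev
    proof eventually_elim
      case (elim k)
      then obtain X where X1: "X \<in> coord_feasible m d (W (r k)) j l" and X2: "objF U d X \<le> objF U d (W (r k)) - \<delta>" by blast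
      have "1 / real (Suc n) \<le> \<delta>" using n by (simp add: inverse_eq_divide)
      then have "objF U d X \<le> objF U d (W (r k)) - 1 / real (Suc n)" using X2 by linarith
      then show ?case unfolding E_def cf using X1 by blast
    qed
    have evn: "eventually (\<lambda>i. \<not> E p n i) sequentially"
      using fin[OF p, of n] by (simp add: not_INFM eventually_cofinite[symmetric] cofinite_eq_sequentially not_frequently)
    have ev2: "eventually (\<lambda>k. \<not> E p n (r k)) sequentially"
      using filterlim_iff[THEN iffD1, OF filterlim_subseq[OF r], rule_format, OF evn] by simp
    have "eventually (\<lambda>k. False) sequentially"
      using ev1 ev2 by eventually_elim simp
    then show False by simp
  qed
qed

theorem theorem6p3:
  fixes m :: "nat \<Rightarrow> nat" and d :: nat
    and U :: "nat \<Rightarrow> (real^'n) set"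
    and Wseq :: "(nat \<Rightarrow> nat \<times> nat) \<Rightarrow> nat \<Rightarrow> nat \<Rightarrow> (real^'n) set"
  assumes "d \<ge> 1"
    and "\<forall>j\<in>{1..d+1}. m j > 0"
    and "CARD('n) = (\<Sum>j=1..d+1. m j)"
    and "\<forall>j\<in>{1..d+1}. subspace (U j) \<and> dim (U j) = m j"
    and "\<forall>\<omega>. Wseq \<omega> 0 \<in> flags m d"
    and "\<forall>\<omega> \<omega>' i. (\<forall>k<i. \<omega> k = \<omega>' k) \<longrightarrow> Wseq \<omega> i = Wseq \<omega>' i"
    and "\<forall>\<omega> i. \<omega> i \<in> pairs d \<longrightarrow>
           Wseq \<omega> (Suc i) \<in> coord_feasible m d (Wseq \<omega> i) (fst (\<omega> i)) (snd (\<omega> i)) \<and>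
           (\<forall>X\<in>coord_feasible m d (Wseq \<omega> i) (fst (\<omega> i)) (snd (\<omega> i)).
              objF U d (Wseq \<omega> (Suc i)) \<le> objF U d X)"
  shows "AE \<omega> in PiM UNIV (\<lambda>_. measure_pmf (pmf_of_set (pairs d))).
           \<forall>Wc. flag_cluster_point m d (Wseq \<omega>) Wc \<longrightarrow> stationary m d U Wc"
proof -
  have finS: "finite (pairs d)"
    by (rule finite_subset[of _ "{1..d+1} \<times> {1..d+1}"]) (auto simp: pairs_def)
  have "(1, 2) \<in> pairs d" using assms(1) by (simp add: pairs_def)
  then have neS: "pairs d \<noteq> {}" by blast
  define E where "E p n i \<omega> = (\<exists>X\<in>coord_feasible m d (Wseq \<omega> i) (fst p) (snd p). objF U d X \<le> objF U d (Wseq \<omega> i) - 1 / real (Suc n))"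
    for p :: "nat \<times> nat" and n i :: nat and \<omega>
  have na: "E p n i \<omega> = E p n i \<omega>'" if "\<forall>k<i. \<omega> k = \<omega>' k" for p n i \<omega> \<omega>'
  proof -
    have "Wseq \<omega> i = Wseq \<omega>' i" using assms(6) that by blast
    then show ?thesis unfolding E_def by simp
  qed
  have AE: "AE \<omega> in PiM UNIV (\<lambda>_. measure_pmf (pmf_of_set (pairs d))). (\<forall>i. \<omega> i \<in> pairs d) \<and>
     (\<forall>p n. p \<in> pairs d \<longrightarrow> (\<exists>\<^sub>\<infinity>i. E p n i \<omega>) \<longrightarrow> (\<exists>\<^sub>\<infinity>i. E p n i \<omega> \<and> \<omega> i = p))"
    by (rule AE_good[OF finS neS na])
  show ?thesis
    using AE
  proof (rule eventually_mono)
    fix \<omega> :: "nat \<Rightarrow> nat \<times> nat"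
    assume good: "(\<forall>i. \<omega> i \<in> pairs d) \<and>
     (\<forall>p n. p \<in> pairs d \<longrightarrow> (\<exists>\<^sub>\<infinity>i. E p n i \<omega>) \<longrightarrow> (\<exists>\<^sub>\<infinity>i. E p n i \<omega> \<and> \<omega> i = p))"
    show "\<forall>Wc. flag_cluster_point m d (Wseq \<omega>) Wc \<longrightarrow> stationary m d U Wc"
    proof (intro allI impI)
      fix Wc assume cl: "flag_cluster_point m d (Wseq \<omega>) Wc"
      show "stationary m d U Wc"
      proof (rule det[where W="Wseq \<omega>" and \<omega>=\<omega>, OF assms(3) _ _ _ _ _ cl])
        show "subspace (U j)" if "j \<in> {1..d+1}" for j using assms(4) that by blast
        show "Wseq \<omega> 0 \<in> flags m d" using assms(5) by blast
        show "Wseq \<omega> (Suc i) \<in> coord_feasible m d (Wseq \<omega> i) (fst (\<omega> i)) (snd (\<omega> i)) \<and>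
           (\<forall>X\<in>coord_feasible m d (Wseq \<omega> i) (fst (\<omega> i)) (snd (\<omega> i)). objF U d (Wseq \<omega> (Suc i)) \<le> objF U d X)"
          if "\<omega> i \<in> pairs d" for i using assms(7) that by blast
        show "\<omega> i \<in> pairs d" for i using good by blast
        show "\<exists>\<^sub>\<infinity>i. (\<exists>X\<in>coord_feasible m d (Wseq \<omega> i) (fst p) (snd p). objF U d X \<le> objF U d (Wseq \<omega> i) - 1 / real (Suc n)) \<and> \<omega> i = p"
          if "p \<in> pairs d" "\<exists>\<^sub>\<infinity>i. \<exists>X\<in>coord_feasible m d (Wseq \<omega> i) (fst p) (snd p). objF U d X \<le> objF U d (Wseq \<omega> i) - 1 / real (Suc n)"
          for p n
          using good that unfolding E_def by blast
      qed
    qed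
  qed
qed

end
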